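(* Let $K$ be a field, $S=K[x_1,\ldots,x_n]$, and $I\subset S$ a strongly stable monomial ideal. Fix integers $1\le d\le N$ such that $d\le\deg(u)\le N$ for all $u\in G(I)$. Then for all $i$, $$\beta_i(I_{\langle N+1\rangle})-\beta_i(I)=\sum_{j=d}^{N}\sum_{k=i+1}^{n} m_{\le k-1}(I_{\langle j\rangle})\binom{k-1}{i}.$$
   Context: $\beta_i(N)=\dim_K\operatorname{Tor}_i^S(K,N)$. $G(I)$ is the minimal set of monomial generators of a monomial ideal $I$. For a monomial $u$, $m(u)=\max\{i:x_i\mid u\}$; $m_i(I)$ is the number of $u\in G(I)$ with $m(u)=i$, and $m_{\le i}(I)=\sum_{j=1}^i m_j(I)$. $I_{\langle j\rangle}$ is the ideal generated by the degree-$j$ elements of $I$. A monomial ideal $I$ is strongly stable if for every monomial $u\in I$ and every variable $x_j$ dividing $u$, one has $x_i(u/x_j)\in I$ for all $i<j$. *)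

theory Defs
  imports Complex_Main "HOL-Library.Function_Algebras"
begin

text \<open>Monomials of S = K[x_1,...,x_n] are represented by exponent vectors
  a :: nat => nat supported on {1..n}; u divides v iff u \<le> v (pointwise).
  A monomial ideal is represented by the set of monomials it contains.\<close>

type_synonym monomial = "nat \<Rightarrow> nat"

definition monomials :: "nat \<Rightarrow> monomial set" where
  "monomials n = {a. \<forall>i. a i \<noteq> 0 \<longrightarrow> i \<in> {1..n}}"

definition monomial_ideal :: "nat \<Rightarrow> monomial set \<Rightarrow> bool" where
  "monomial_ideal n I \<longleftrightarrow> I \<subseteq> monomials n \<and> (\<forall>u\<in>I. \<forall>v\<in>monomials n. u \<le> v \<longrightarrow> v \<in> I)"

definition gens :: "monomial set \<Rightarrow> monomial set" where
  "gens I = {u\<in>I. \<forall>v\<in>I. v \<le> u \<longrightarrow> v = u}"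

definition mdeg :: "nat \<Rightarrow> monomial \<Rightarrow> nat" where
  "mdeg n u = (\<Sum>i=1..n. u i)"

definition mmax :: "monomial \<Rightarrow> nat" where
  "mmax u = Max {i. u i \<noteq> 0}"

definition m_count :: "monomial set \<Rightarrow> nat \<Rightarrow> nat" where
  "m_count I i = card {u \<in> gens I. mmax u = i}"

definition m_le :: "monomial set \<Rightarrow> nat \<Rightarrow> nat" where
  "m_le I i = (\<Sum>j=1..i. m_count I j)"

text \<open>I_<j>: the ideal generated by the degree-j monomials of I.\<close>
definition deg_part :: "nat \<Rightarrow> monomial set \<Rightarrow> nat \<Rightarrow> monomial set" where
  "deg_part n I j = {v \<in> monomials n. \<exists>u\<in>I. mdeg n u = j \<and> u \<le> v}"

definition strongly_stable :: "nat \<Rightarrow> monomial set \<Rightarrow> bool" where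
  "strongly_stable n I \<longleftrightarrow> monomial_ideal n I \<and>
     (\<forall>u\<in>I. \<forall>j. 0 < u j \<longrightarrow> (\<forall>i. 1 \<le> i \<and> i < j \<longrightarrow> (u(j := u j - 1))(i := u i + 1) \<in> I))"

text \<open>Tor_i^S(K, I) is computed by the Koszul complex K(x_1,...,x_n) \<otimes> I, which is
  Z^n-graded. In multidegree a, its i-th chain space has K-basis the i-subsets F of
  {1..n} with x^(a - e_F) \<in> I, i.e. the elements e_F \<otimes> x^(a-e_F). Chains are
  finitely supported functions from subsets to K.\<close>

definition kbasis :: "nat \<Rightarrow> monomial set \<Rightarrow> monomial \<Rightarrow> nat \<Rightarrow> nat set set" where
  "kbasis n I a i = {F. F \<subseteq> {1..n} \<and> card F = i \<and> (\<forall>k\<in>F. 0 < a k) \<and>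
       (\<lambda>k. a k - (if k \<in> F then 1 else 0)) \<in> I}"

definition kchains :: "'k::field itself \<Rightarrow> nat \<Rightarrow> monomial set \<Rightarrow> monomial \<Rightarrow> nat \<Rightarrow> (nat set \<Rightarrow> 'k) set" where
  "kchains K n I a i = {c. \<forall>F. c F \<noteq> 0 \<longrightarrow> F \<in> kbasis n I a i}"

text \<open>Koszul differential: d(e_F \<otimes> m) = sum_{j in F} (-1)^{#{k in F, k<j}} e_{F-{j}} \<otimes> x_j m.\<close>
definition kdiff :: "nat \<Rightarrow> (nat set \<Rightarrow> 'k::field) \<Rightarrow> nat set \<Rightarrow> 'k" where
  "kdiff n c G = (\<Sum>j\<in>{1..n} - G. (-1) ^ card {k \<in> G. k < j} * c (insert j G))"

definition fscale :: "'k::field \<Rightarrow> (nat set \<Rightarrow> 'k) \<Rightarrow> nat set \<Rightarrow> 'k" where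
  "fscale r c = (\<lambda>F. r * c F)"

definition betti_mg :: "'k::field itself \<Rightarrow> nat \<Rightarrow> monomial set \<Rightarrow> nat \<Rightarrow> monomial \<Rightarrow> nat" where
  "betti_mg K n I i a =
     vector_space.dim (fscale :: 'k \<Rightarrow> _) {c \<in> kchains K n I a i. kdiff n c = (\<lambda>_. 0)}
     - vector_space.dim (fscale :: 'k \<Rightarrow> _) (kdiff n ` kchains K n I a (Suc i))"

text \<open>beta_i(I) = dim_K Tor_i^S(K, I) = sum over all multidegrees (only finitely many are nonzero).\<close>
definition betti :: "'k::field itself \<Rightarrow> nat \<Rightarrow> monomial set \<Rightarrow> nat \<Rightarrow> nat" where
  "betti K n I i = (\<Sum>a \<in> {a \<in> monomials n. betti_mg K n I i a \<noteq> 0}. betti_mg K n I i a)"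

end

theory Submission
  imports Defs
begin

interpretation fs: vector_space "fscale :: 'a::field \<Rightarrow> (nat set \<Rightarrow> 'a) \<Rightarrow> nat set \<Rightarrow> 'a"
  by unfold_locales (auto simp: fscale_def fun_eq_iff algebra_simps)

definition delta :: "nat set \<Rightarrow> nat set \<Rightarrow> 'a::field" where
  "delta F = (\<lambda>G. if G = F then 1 else 0)"

definition ch :: "'a::field itself \<Rightarrow> nat set set \<Rightarrow> nat \<Rightarrow> (nat set \<Rightarrow> 'a) set" where
  "ch K X j = {c. \<forall>F. c F \<noteq> 0 \<longrightarrow> F \<in> X \<and> card F = j}"

definition cyc :: "'a::field itself \<Rightarrow> nat \<Rightarrow> nat set set \<Rightarrow> nat \<Rightarrow> (nat set \<Rightarrow> 'a) set" where
  "cyc K n X j = {c \<in> ch K X j. kdiff n c = (\<lambda>_. 0)}"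

definition bd :: "'a::field itself \<Rightarrow> nat \<Rightarrow> nat set set \<Rightarrow> nat \<Rightarrow> (nat set \<Rightarrow> 'a) set" where
  "bd K n X j = kdiff n ` ch K X (Suc j)"

definition hom :: "'a::field itself \<Rightarrow> nat \<Rightarrow> nat set set \<Rightarrow> nat \<Rightarrow> nat" where
  "hom K n X j = vector_space.dim (fscale :: 'a \<Rightarrow> _) (cyc K n X j)
      - vector_space.dim (fscale :: 'a \<Rightarrow> _) (bd K n X j)"

definition dc :: "nat \<Rightarrow> nat set set \<Rightarrow> bool" where
  "dc n X \<longleftrightarrow> (\<forall>F\<in>X. F \<subseteq> {1..n}) \<and> (\<forall>F\<in>X. \<forall>x\<in>F. F - {x} \<in> X)"

lemma sum_fun_apply: "(sum f A) x = sum (\<lambda>a. f a x) A"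
  by (induction A rule: infinite_finite_induct) auto

lemma kdiff_add: "kdiff n (c + d) = kdiff n c + kdiff n d"
  by (auto simp: kdiff_def fun_eq_iff sum.distrib algebra_simps)

lemma kdiff_scale: "kdiff n (fscale r c) = fscale r (kdiff n c)"
  by (auto simp: kdiff_def fscale_def fun_eq_iff sum_distrib_left algebra_simps)

lemma kdiff_zero: "kdiff n 0 = 0"
  by (auto simp: kdiff_def fun_eq_iff)

lemma kdiff_zero': "kdiff n (\<lambda>_. 0) = (\<lambda>_. 0)"
  by (auto simp: kdiff_def fun_eq_iff)

lemma kdiff_diff: "kdiff n (c - d) = kdiff n c - kdiff n d"
  by (auto simp: kdiff_def fun_eq_iff sum_subtractf algebra_simps)

lemma fscale_apply[simp]: "fscale r c F = r * c F"
  by (simp add: fscale_def)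

lemma ch_subspace: "fs.subspace (ch K X j)"
proof -
  have "x + y \<in> ch K X j" if "x \<in> ch K X j" "y \<in> ch K X j" for x y
  proof -
    have "(x + y) F \<noteq> 0 \<Longrightarrow> F \<in> X \<and> card F = j" for F
    proof -
      assume "(x + y) F \<noteq> 0"
      then have "x F \<noteq> 0 \<or> y F \<noteq> 0" by auto
      then show ?thesis using that unfolding ch_def by blast
    qed
    then show ?thesis unfolding ch_def by blast
  qed
  moreover have "fscale r x \<in> ch K X j" if "x \<in> ch K X j" for x r
    using that unfolding ch_def by auto
  moreover have "0 \<in> ch K X j" unfolding ch_def by simp
  ultimately show ?thesis unfolding fs.subspace_def by blast
qed

lemma cyc_subspace: "fs.subspace (cyc K n X j)"
proof -
  have s: "fs.subspace (ch K X j)" by (rule ch_subspace)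
  have "x + y \<in> cyc K n X j" if "x \<in> cyc K n X j" "y \<in> cyc K n X j" for x y
    using that fs.subspace_add[OF s] unfolding cyc_def by (simp add: kdiff_add fun_eq_iff)
  moreover have "fscale r x \<in> cyc K n X j" if "x \<in> cyc K n X j" for x r
    using that fs.subspace_scale[OF s] unfolding cyc_def by (simp add: kdiff_scale fun_eq_iff)
  moreover have "0 \<in> cyc K n X j" using fs.subspace_0[OF s] unfolding cyc_def by (simp add: kdiff_def fun_eq_iff)
  ultimately show ?thesis unfolding fs.subspace_def by blast
qed

lemma bd_subspace: "fs.subspace (bd K n X j)"
proof -
  have "0 \<in> bd K n X j"
    unfolding bd_def using ch_subspace[of K X "Suc j"]
    by (metis fs.subspace_0 image_eqI kdiff_zero)
  moreover have "x + y \<in> bd K n X j" if hx: "x \<in> bd K n X j" and hy: "y \<in> bd K n X j" for x y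
  proof -
    obtain a where "a \<in> ch K X (Suc j)" "x = kdiff n a"
      using hx unfolding bd_def by auto
    moreover obtain b where "b \<in> ch K X (Suc j)" "y = kdiff n b"
      using hy unfolding bd_def by auto
    ultimately show ?thesis unfolding bd_def
      by (metis ch_subspace fs.subspace_add image_eqI kdiff_add)
  qed
  moreover have "fscale r x \<in> bd K n X j" if hx: "x \<in> bd K n X j" for x r
  proof -
    obtain a where "a \<in> ch K X (Suc j)" "x = kdiff n a"
      using hx unfolding bd_def by auto
    then show ?thesis unfolding bd_def
      by (metis ch_subspace fs.subspace_scale image_eqI kdiff_scale)
  qed
  ultimately show ?thesis unfolding fs.subspace_def by blast
qed

lemma delta_apply: "delta F G = (if G = F then 1 else 0)"
  by (simp add: delta_def)

lemma ch_span:
  assumes "finite X"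
  shows "ch K X j \<subseteq> fs.span (delta ` X)"
proof
  fix c :: "nat set \<Rightarrow> 'a" assume c: "c \<in> ch K X j"
  have "c = (\<Sum>F\<in>X. fscale (c F) (delta F))"
  proof
    fix G
    show "c G = (\<Sum>F\<in>X. fscale (c F) (delta F)) G"
      using c assms unfolding sum_fun_apply
      by (auto simp: delta_apply ch_def if_distrib cong: if_cong)
  qed
  also have "\<dots> \<in> fs.span (delta ` X)"
    by (intro fs.span_sum fs.span_scale fs.span_base) auto
  finally show "c \<in> fs.span (delta ` X)" .
qed

lemma dc_kdiff:
  assumes "dc n X" "c \<in> ch K X (Suc j)"
  shows "kdiff n c \<in> ch K X j"
  unfolding ch_def mem_Collect_eq
proof (intro allI impI)
  fix G assume "kdiff n c G \<noteq> 0"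
  then obtain k where k: "k \<in> {1..n} - G" "c (insert k G) \<noteq> 0"
    unfolding kdiff_def by (metis (no_types, lifting) mult_zero_right sum.neutral)
  then have in1: "insert k G \<in> X" "card (insert k G) = Suc j"
    using assms(2) unfolding ch_def by auto
  then have "insert k G - {k} \<in> X" using assms(1) unfolding dc_def by blast
  moreover have "insert k G - {k} = G" using k by auto
  moreover have "finite G"
    using in1 assms(1) unfolding dc_def by (meson finite_atLeastAtMost finite_subset subset_insertI2 subset_refl)
  ultimately show "G \<in> X \<and> card G = j" using in1 k by auto
qed

definition sg :: "nat \<Rightarrow> nat set \<Rightarrow> 'a::field" where
  "sg k G = (-1) ^ card {x \<in> G. x < k}"

lemma sg_insert:
  assumes "j \<notin> G" "k \<noteq> j"
  shows "(sg k (insert j G) :: 'a::field) = (if j < k then - sg k G else sg k G)"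
proof -
  have fin: "finite {x \<in> G. x < k}" by simp
  have "{x \<in> insert j G. x < k} = (if j < k then insert j {x \<in> G. x < k} else {x \<in> G. x < k})"
    by auto
  then show ?thesis using assms fin by (auto simp: sg_def)
qed

lemma kdiff_sg: "kdiff n c G = (\<Sum>j\<in>{1..n} - G. sg j G * c (insert j G))"
  by (simp add: kdiff_def sg_def)

lemma kdiff_kdiff: "kdiff n (kdiff n c) = (\<lambda>_. 0)"
proof
  fix G
  define R where "R = {1..n} - G"
  define P where "P j k = sg j G * sg k G * c (insert k (insert j G))" for j k
  have Psym: "P j k = P k j" for j k
    unfolding P_def by (simp add: insert_commute mult.commute)
  have inner: "(\<Sum>k\<in>{1..n} - insert j G. sg k (insert j G) * c (insert k (insert j G)))
      = (\<Sum>k\<in>R. if k = j then 0 else if j < k then - (sg k G * c (insert k (insert j G)))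
             else sg k G * c (insert k (insert j G)))" if "j \<in> R" for j
  proof -
    have "{1..n} - insert j G = R - {j}" unfolding R_def by auto
    then have "(\<Sum>k\<in>{1..n} - insert j G. sg k (insert j G) * c (insert k (insert j G)))
        = (\<Sum>k\<in>R - {j}. sg k (insert j G) * c (insert k (insert j G)))" by simp
    also have "\<dots> = (\<Sum>k\<in>R - {j}. if j < k then - (sg k G * c (insert k (insert j G)))
             else sg k G * c (insert k (insert j G)))"
      using that unfolding R_def by (intro sum.cong refl) (auto simp: sg_insert)
    also have "\<dots> = (\<Sum>k\<in>R. if k = j then 0 else if j < k then - (sg k G * c (insert k (insert j G)))
             else sg k G * c (insert k (insert j G)))"
      using that unfolding R_def
      by (subst sum.remove[of _ j]) (auto intro!: sum.cong)
    finally show ?thesis .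
  qed
  have "kdiff n (kdiff n c) G = (\<Sum>j\<in>R. sg j G * (\<Sum>k\<in>{1..n} - insert j G. sg k (insert j G) * c (insert k (insert j G))))"
    unfolding kdiff_sg R_def by simp
  also have "\<dots> = (\<Sum>j\<in>R. \<Sum>k\<in>R. (if j < k then - P j k else 0) + (if k < j then P j k else 0))"
    apply (intro sum.cong refl)
    apply (subst inner, assumption)
    apply (subst sum_distrib_left)
    apply (intro sum.cong refl)
    apply (auto simp: P_def)
    done
  also have "\<dots> = (\<Sum>j\<in>R. \<Sum>k\<in>R. (if j < k then - P j k else 0)) + (\<Sum>j\<in>R. \<Sum>k\<in>R. (if k < j then P j k else 0))"
    by (simp add: sum.distrib)
  also have "(\<Sum>j\<in>R. \<Sum>k\<in>R. (if k < j then P j k else 0)) = (\<Sum>j\<in>R. \<Sum>k\<in>R. (if j < k then P j k else 0))"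
    by (subst sum.swap) (intro sum.cong refl, metis Psym)
  also have "(\<Sum>j\<in>R. \<Sum>k\<in>R. (if j < k then - P j k else 0)) + (\<Sum>j\<in>R. \<Sum>k\<in>R. (if j < k then P j k else 0)) = 0"
    by (simp add: sum.distrib[symmetric] if_distrib cong: if_cong)
  finally show "kdiff n (kdiff n c) G = 0" .
qed

lemma dim_fin:
  assumes "fs.subspace (U :: (nat set \<Rightarrow> 'a::field) set)" "U \<subseteq> fs.span W" "finite W"
  obtains B where "B \<subseteq> U" "fs.independent B" "fs.span B = U" "finite B" "card B = fs.dim U"
proof -
  obtain B where B: "B \<subseteq> U" "fs.independent B" "U \<subseteq> fs.span B" "card B = fs.dim U"
    using fs.basis_exists[of U] by blast
  have "fs.span B = U" using B assms(1) by (intro fs.span_subspace) auto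
  moreover have "finite B"
    using fs.independent_span_bound[OF assms(3) B(2)] B(1) assms(2) by blast
  ultimately show ?thesis using that B by blast
qed

lemma dim_inc:
  assumes U: "fs.subspace (U :: (nat set \<Rightarrow> 'a::field) set)" and V: "fs.subspace V"
    and UV: "U \<subseteq> V" and xV: "x \<in> V" and xU: "x \<notin> U"
    and dec: "\<forall>v\<in>V. \<exists>k. v - fscale k x \<in> U"
    and W: "U \<subseteq> fs.span W" "finite W"
  shows "fs.dim V = Suc (fs.dim U)"
proof -
  obtain B where B: "B \<subseteq> U" "fs.independent B" "fs.span B = U" "finite B" "card B = fs.dim U"
    using dim_fin[OF U W] by blast
  have ind: "fs.independent (insert x B)"
    using B xU by (intro fs.independent_insertI) auto
  have "fs.span (insert x B) = V"
  proof
    show "fs.span (insert x B) \<subseteq> V"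
      using B UV xV V by (intro fs.span_minimal) auto
    show "V \<subseteq> fs.span (insert x B)"
    proof
      fix v assume "v \<in> V"
      then obtain k where "v - fscale k x \<in> U" using dec by blast
      then show "v \<in> fs.span (insert x B)"
        unfolding fs.span_insert using B by auto
    qed
  qed
  moreover have "fs.span V = V" using V by simp
  ultimately have "fs.dim V = card (insert x B)"
    using fs.dim_eq_card[OF _ ind, of V] by metis
  also have "\<dots> = Suc (card B)" using B xU by (metis card_insert_disjoint subsetD)
  finally show ?thesis using B by simp
qed

lemma dim_mono':
  assumes "(U :: (nat set \<Rightarrow> 'a::field) set) \<subseteq> V" "fs.subspace V" "V \<subseteq> fs.span W" "finite W"
  shows "fs.dim U \<le> fs.dim V"
proof -
  obtain B where B: "B \<subseteq> V" "fs.independent B" "fs.span B = V" "finite B" "card B = fs.dim V"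
    using dim_fin[OF assms(2-4)] by blast
  show ?thesis using fs.dim_le_card[of U B] B assms(1) by auto
qed

lemma dim_eq_sub:
  assumes U: "fs.subspace (U :: (nat set \<Rightarrow> 'a::field) set)" and V: "fs.subspace V"
    and UV: "U \<subseteq> V" and W: "V \<subseteq> fs.span W" "finite W" and le: "fs.dim V \<le> fs.dim U"
  shows "V \<subseteq> U"
proof (rule ccontr)
  assume "\<not> V \<subseteq> U"
  then obtain x where x: "x \<in> V" "x \<notin> U" by blast
  let ?V = "fs.span (insert x U)"
  have "fs.dim ?V = Suc (fs.dim U)"
  proof (rule dim_inc[OF U _ _ _ x(2) _ _ W(2)])
    show "fs.subspace ?V" by simp
    show "U \<subseteq> ?V" by (meson fs.span_superset subset_insertI subset_trans)
    show "x \<in> ?V" by (simp add: fs.span_base)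
    show "\<forall>v\<in>?V. \<exists>k. v - fscale k x \<in> U" (is ?G)
    proof -
      have sU: "fs.span U = U" using U by simp
      show ?G unfolding fs.span_insert sU by blast
    qed
    show "U \<subseteq> fs.span W" using UV W fs.span_superset by blast
  qed
  moreover have "fs.dim ?V \<le> fs.dim V"
    using x UV V W by (intro dim_mono'[OF _ V W]) (simp add: fs.span_minimal)
  ultimately show False using le by simp
qed

lemma ch_mono: "X \<subseteq> Y \<Longrightarrow> ch K X j \<subseteq> ch K Y j"
  unfolding ch_def by auto

lemma dc_finite: "dc n X \<Longrightarrow> finite X"
  unfolding dc_def by (meson Pow_iff finite_Pow_iff finite_atLeastAtMost finite_subset subsetI)

lemma dc_fin_el: "dc n X \<Longrightarrow> F \<in> X \<Longrightarrow> finite F"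
  unfolding dc_def by (meson finite_atLeastAtMost finite_subset)

lemma cyc_ch: "cyc K n X j \<subseteq> ch K X j"
  unfolding cyc_def by auto

lemma bd_ch: "dc n X \<Longrightarrow> bd K n X j \<subseteq> ch K X j"
  unfolding bd_def using dc_kdiff by blast

lemma bd_cyc: "dc n X \<Longrightarrow> bd K n X j \<subseteq> cyc K n X j"
  unfolding cyc_def using bd_ch[of n X K j] unfolding bd_def by (auto simp: kdiff_kdiff)

lemma ch_span': "dc n X \<Longrightarrow> ch K X j \<subseteq> fs.span (delta ` X)"
  using ch_span dc_finite by blast

lemma dim_bd_cyc: "dc n X \<Longrightarrow> fs.dim (bd K n X j) \<le> fs.dim (cyc K n X j)"
  by (rule dim_mono'[OF bd_cyc cyc_subspace _ finite_imageI[OF dc_finite]])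
     (use cyc_ch ch_span' in blast)+

lemma hom_zero_sub:
  assumes "dc n X" "hom K n X j = 0"
  shows "cyc K n X j \<subseteq> bd K n X j"
  using assms unfolding hom_def
  by (intro dim_eq_sub[OF bd_subspace cyc_subspace bd_cyc[OF assms(1)] _ finite_imageI[OF dc_finite[OF assms(1)]]])
     (use cyc_ch ch_span' in blast, simp)

lemma delta_ch: "F \<in> X \<Longrightarrow> card F = j \<Longrightarrow> delta F \<in> ch K X j"
  unfolding ch_def delta_def by auto

lemma ch_vanish: "c \<in> ch K X j \<Longrightarrow> F \<notin> X \<Longrightarrow> c F = 0"
  unfolding ch_def by auto

lemma ch_vanish_card: "c \<in> ch K X j \<Longrightarrow> card F \<noteq> j \<Longrightarrow> c F = 0"
  unfolding ch_def by auto

lemma kdiff_uminus: "kdiff n (- c) = - kdiff n c"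
  by (auto simp: kdiff_def fun_eq_iff sum_negf)

lemma ch_diff_delta:
  assumes "c \<in> ch K (insert A X) j"
  shows "c - fscale (c A) (delta A) \<in> ch K X j"
  using assms unfolding ch_def by (auto simp: delta_apply)

lemma ch_insert_other:
  assumes "card A \<noteq> j"
  shows "ch K (insert A X) j = ch K X j"
  using assms unfolding ch_def by auto

lemma hom_single:
  fixes K :: "'a::field itself"
  assumes dcX: "dc n X" and dcX': "dc n (insert A X)" and AX: "A \<notin> X"
    and q: "card A = q"
    and ex: "\<exists>l \<in> ch K X q. kdiff n l = kdiff n (delta A :: nat set \<Rightarrow> 'a)"
  shows "hom K n (insert A X) q = Suc (hom K n X q)"
    and "j \<noteq> q \<Longrightarrow> hom K n (insert A X) j = hom K n X j"
proof -
  let ?X' = "insert A X"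
  obtain l where l: "l \<in> ch K X q" "kdiff n l = kdiff n (delta A :: nat set \<Rightarrow> 'a)"
    using ex by blast
  define v where "v = (delta A :: nat set \<Rightarrow> 'a) - l"
  have chXX': "ch K X j \<subseteq> ch K ?X' j" for j by (rule ch_mono) auto
  have dA: "(delta A :: nat set \<Rightarrow> 'a) \<in> ch K ?X' q" using q by (intro delta_ch) auto
  have vch: "v \<in> ch K ?X' q"
    unfolding v_def using dA chXX' l(1) by (metis ch_subspace fs.subspace_diff subsetD)
  have vk: "kdiff n v = (\<lambda>_. 0)" unfolding v_def kdiff_diff l(2) by (simp add: fun_eq_iff)
  have lA: "l A = 0" using l(1) AX ch_vanish by blast
  have vA: "v A = 1" unfolding v_def using lA by (simp add: delta_apply)
  have cycZ: "cyc K n ?X' q \<subseteq> fs.span (delta ` ?X')"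
    using cyc_ch ch_span'[OF dcX'] by blast
  have "fs.dim (cyc K n ?X' q) = Suc (fs.dim (cyc K n X q))"
  proof (rule dim_inc[OF cyc_subspace cyc_subspace])
    show "cyc K n X q \<subseteq> cyc K n ?X' q" using chXX' unfolding cyc_def by auto
    show "v \<in> cyc K n ?X' q" using vch vk unfolding cyc_def by auto
    show "v \<notin> cyc K n X q" using vA AX ch_vanish[of v K X q A] unfolding cyc_def by auto
    show "\<forall>z\<in>cyc K n ?X' q. \<exists>k. z - fscale k v \<in> cyc K n X q"
    proof
      fix z assume z: "z \<in> cyc K n ?X' q"
      have "z - fscale (z A) v = (z - fscale (z A) (delta A)) + fscale (z A) l"
        unfolding v_def by (simp add: fun_eq_iff algebra_simps)
      also have "\<dots> \<in> ch K X q"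
        using ch_diff_delta[of z K A X q] z l(1) unfolding cyc_def
        by (intro fs.subspace_add[OF ch_subspace] fs.subspace_scale[OF ch_subspace]) auto
      finally have "z - fscale (z A) v \<in> ch K X q" .
      moreover have "kdiff n (z - fscale (z A) v) = (\<lambda>_. 0)"
        using z vk unfolding cyc_def by (simp add: kdiff_diff kdiff_scale fun_eq_iff)
      ultimately show "\<exists>k. z - fscale k v \<in> cyc K n X q" unfolding cyc_def by blast
    qed
    show "cyc K n X q \<subseteq> fs.span (delta ` ?X')"
      using cycZ chXX' unfolding cyc_def by blast
    show "finite (delta ` ?X')" using dc_finite[OF dcX'] by simp
  qed
  moreover have "bd K n ?X' q = bd K n X q"
    unfolding bd_def using ch_insert_other[of A "Suc q" K X] q by simp
  moreover have "fs.dim (bd K n X q) \<le> fs.dim (cyc K n X q)" by (rule dim_bd_cyc[OF dcX])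
  ultimately show "hom K n ?X' q = Suc (hom K n X q)"
    unfolding hom_def by simp
  assume jq: "j \<noteq> q"
  have cyceq: "cyc K n ?X' j = cyc K n X j"
    unfolding cyc_def using ch_insert_other[of A j K X] q jq by simp
  have "bd K n ?X' j = bd K n X j"
  proof (cases "Suc j = q")
    case False
    then show ?thesis unfolding bd_def using ch_insert_other[of A "Suc j" K X] q by simp
  next
    case True
    show ?thesis
    proof
      show "bd K n X j \<subseteq> bd K n ?X' j" unfolding bd_def using chXX' by blast
      show "bd K n ?X' j \<subseteq> bd K n X j"
      proof
        fix w assume "w \<in> bd K n ?X' j"
        then obtain c where c: "c \<in> ch K ?X' (Suc j)" "w = kdiff n c" unfolding bd_def by blast
        let ?c = "(c - fscale (c A) (delta A)) + fscale (c A) l"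
        have "?c \<in> ch K X (Suc j)"
          using ch_diff_delta[OF c(1)] l(1) True
          by (intro fs.subspace_add[OF ch_subspace] fs.subspace_scale[OF ch_subspace]) auto
        moreover have "kdiff n ?c = w"
          using c(2) l(2) by (simp add: kdiff_add kdiff_diff kdiff_scale)
        ultimately show "w \<in> bd K n X j" unfolding bd_def by (metis image_eqI)
      qed
    qed
  qed
  then show "hom K n ?X' j = hom K n X j" unfolding hom_def using cyceq by simp
qed

lemma sg_sq: "(sg b F :: 'a::field) * sg b F = 1"
  unfolding sg_def by (simp add: power_mult_distrib[symmetric])

lemma sg_nz: "(sg b F :: 'a::field) \<noteq> 0"
  unfolding sg_def by simp

lemma kdiff_delta_at:
  assumes "b \<notin> F" "b \<in> {1..n}"
  shows "kdiff n (delta (insert b F) :: nat set \<Rightarrow> 'a::field) F = sg b F"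
proof -
  have "kdiff n (delta (insert b F) :: nat set \<Rightarrow> 'a) F
      = (\<Sum>j\<in>{1..n} - F. if j = b then sg j F else 0)"
    unfolding kdiff_sg
  proof (intro sum.cong refl)
    fix j assume "j \<in> {1..n} - F"
    then have "(insert j F = insert b F) = (j = b)" using assms(1) by blast
    then show "sg j F * delta (insert b F) (insert j F) = (if j = b then sg j F else 0)"
      by (simp add: delta_apply)
  qed
  also have "\<dots> = sg b F" using assms by simp
  finally show ?thesis .
qed

lemma hom_pair:
  fixes K :: "'a::field itself"
  assumes dcX: "dc n X" and dcX': "dc n (insert F (insert G X))"
    and G: "G = insert b F" and bF: "b \<notin> F" and b: "b \<in> {1..n}"
    and FX: "F \<notin> X" and GX: "G \<notin> X"
  shows "hom K n (insert F (insert G X)) j = hom K n X j"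
proof -
  let ?X' = "insert F (insert G X)"
  define p where "p = card F"
  have finF: "finite F" using dcX' dc_fin_el by blast
  have cG: "card G = Suc p" unfolding G p_def using finF bF by simp
  have cF: "card F = p" by (simp add: p_def)
  define s where "s = (sg b F :: 'a)"
  have ss: "s * s = 1" unfolding s_def by (rule sg_sq)
  have snz: "s \<noteq> 0" unfolding s_def by (rule sg_nz)
  define v where "v = kdiff n (delta G :: nat set \<Rightarrow> 'a)"
  have vF: "v F = s" unfolding v_def s_def G using kdiff_delta_at[OF bF b] by simp
  have chXX': "ch K X j \<subseteq> ch K ?X' j" for j by (rule ch_mono) auto
  have dG: "(delta G :: nat set \<Rightarrow> 'a) \<in> ch K ?X' (Suc p)" using cG by (intro delta_ch) auto
  have vch: "v \<in> ch K ?X' p" unfolding v_def using dc_kdiff[OF dcX' dG] .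
  have vk: "kdiff n v = (\<lambda>_. 0)" unfolding v_def by (rule kdiff_kdiff)
  have other: "j \<noteq> p \<Longrightarrow> j \<noteq> Suc p \<Longrightarrow> ch K ?X' j = ch K X j" for j
    using ch_insert_other[of F j K "insert G X"] ch_insert_other[of G j K X] cF cG by simp
  have decp: "c - fscale (c F) (delta F) \<in> ch K X p" if "c \<in> ch K ?X' p" for c
    using ch_diff_delta[OF that] ch_insert_other[of G p K X] cG by simp
  have decSp: "c - fscale (c G) (delta G) \<in> ch K X (Suc p)" if "c \<in> ch K ?X' (Suc p)" for c
  proof -
    have "c \<in> ch K (insert G X) (Suc p)" using that ch_insert_other[of F "Suc p" K "insert G X"] cF by simp
    then show ?thesis by (rule ch_diff_delta)
  qed
  have finW: "finite (delta ` ?X')" using dc_finite[OF dcX'] by simp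
  have spanW: "ch K X j \<subseteq> fs.span (delta ` ?X')" for j
    using chXX' ch_span'[OF dcX'] by blast
  have cycSp: "cyc K n ?X' (Suc p) = cyc K n X (Suc p)"
  proof
    show "cyc K n X (Suc p) \<subseteq> cyc K n ?X' (Suc p)" using chXX' unfolding cyc_def by blast
    show "cyc K n ?X' (Suc p) \<subseteq> cyc K n X (Suc p)"
    proof
      fix c assume c: "c \<in> cyc K n ?X' (Suc p)"
      define l where "l = c - fscale (c G) (delta G)"
      have l: "l \<in> ch K X (Suc p)" unfolding l_def using decSp c unfolding cyc_def by blast
      have "kdiff n l \<in> ch K X p" using dc_kdiff[OF dcX l] .
      then have "kdiff n l F = 0" using FX ch_vanish by blast
      moreover have "kdiff n c = kdiff n l + fscale (c G) v"
        unfolding l_def v_def by (simp add: kdiff_diff kdiff_scale)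
      moreover have "kdiff n c F = 0" using c unfolding cyc_def by simp
      ultimately have "c G * s = 0" using vF by (simp add: mult.commute)
      then have "c G = 0" using snz by simp
      then have "c = l" unfolding l_def by (simp add: fun_eq_iff)
      then show "c \<in> cyc K n X (Suc p)" using l c unfolding cyc_def by simp
    qed
  qed
  have bdSp: "bd K n ?X' (Suc p) = bd K n X (Suc p)"
    unfolding bd_def using other[of "Suc (Suc p)"] by simp
  have cycp: "fs.dim (cyc K n ?X' p) = Suc (fs.dim (cyc K n X p))"
  proof (rule dim_inc[OF cyc_subspace cyc_subspace _ _ _ _ _ finW])
    show "cyc K n X p \<subseteq> cyc K n ?X' p" using chXX' unfolding cyc_def by blast
    show "v \<in> cyc K n ?X' p" using vch vk unfolding cyc_def by blast
    show "v \<notin> cyc K n X p" using vF snz FX ch_vanish[of v K X p F] unfolding cyc_def by auto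
    show "cyc K n X p \<subseteq> fs.span (delta ` ?X')" using spanW cyc_ch by blast
    show "\<forall>z\<in>cyc K n ?X' p. \<exists>k. z - fscale k v \<in> cyc K n X p"
    proof
      fix z assume z: "z \<in> cyc K n ?X' p"
      define w where "w = z - fscale (z F * s) v"
      have wch: "w \<in> ch K ?X' p" unfolding w_def using z vch unfolding cyc_def
        by (intro fs.subspace_diff[OF ch_subspace] fs.subspace_scale[OF ch_subspace]) auto
      have "w F = 0" unfolding w_def using vF ss by (simp add: mult.assoc)
      then have "w - fscale (w F) (delta F) = w" by (simp add: fun_eq_iff)
      then have "w \<in> ch K X p" using decp[OF wch] by metis
      moreover have "kdiff n w = (\<lambda>_. 0)"
        using z vk unfolding w_def cyc_def by (simp add: kdiff_diff kdiff_scale fun_eq_iff)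
      ultimately show "\<exists>k. z - fscale k v \<in> cyc K n X p" unfolding cyc_def w_def by blast
    qed
  qed
  have bdp: "fs.dim (bd K n ?X' p) = Suc (fs.dim (bd K n X p))"
  proof (rule dim_inc[OF bd_subspace bd_subspace _ _ _ _ _ finW])
    show "bd K n X p \<subseteq> bd K n ?X' p" using chXX' unfolding bd_def by blast
    show "v \<in> bd K n ?X' p" unfolding bd_def v_def using dG by blast
    show "v \<notin> bd K n X p" using vF snz FX bd_ch[OF dcX, of K p] ch_vanish[of v K X p F] by auto
    show "bd K n X p \<subseteq> fs.span (delta ` ?X')" using spanW bd_ch[OF dcX] by blast
    show "\<forall>z\<in>bd K n ?X' p. \<exists>k. z - fscale k v \<in> bd K n X p"
    proof
      fix z assume "z \<in> bd K n ?X' p"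
      then obtain c where c: "c \<in> ch K ?X' (Suc p)" "z = kdiff n c" unfolding bd_def by blast
      have "z - fscale (c G) v = kdiff n (c - fscale (c G) (delta G))"
        unfolding c(2) v_def by (simp add: kdiff_diff kdiff_scale)
      then show "\<exists>k. z - fscale k v \<in> bd K n X p" unfolding bd_def using decSp[OF c(1)] by blast
    qed
  qed
  have bdpm: "bd K n ?X' j = bd K n X j" if jp1: "Suc j = p" for j
  proof
    show "bd K n X j \<subseteq> bd K n ?X' j" using chXX' unfolding bd_def by blast
    show "bd K n ?X' j \<subseteq> bd K n X j"
    proof
      fix z assume "z \<in> bd K n ?X' j"
      then obtain c where c: "c \<in> ch K ?X' p" "z = kdiff n c" unfolding bd_def using jp1 by blast
      define r where "r = v - fscale s (delta F)"
      have r: "r \<in> ch K X p" unfolding r_def using decp[OF vch] vF by simp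
      have eq: "fscale s (kdiff n (delta F)) = - kdiff n r"
        using vk unfolding r_def by (simp add: kdiff_diff kdiff_scale fun_eq_iff)
      have "kdiff n (delta F :: nat set \<Rightarrow> 'a) = fscale s (fscale s (kdiff n (delta F)))"
        using ss by (simp add: fun_eq_iff mult.assoc[symmetric])
      also have "\<dots> = fscale s (- kdiff n r)" by (simp only: eq)
      also have "\<dots> = kdiff n (fscale (- s) r)" by (subst kdiff_scale) (simp add: fun_eq_iff)
      finally have "kdiff n (delta F :: nat set \<Rightarrow> 'a) = kdiff n (fscale (- s) r)" .
      then have "z = kdiff n ((c - fscale (c F) (delta F)) + fscale (c F) (fscale (- s) r))"
        unfolding c(2) by (simp add: kdiff_add kdiff_diff kdiff_scale kdiff_uminus)
      moreover have "(c - fscale (c F) (delta F)) + fscale (c F) (fscale (- s) r) \<in> ch K X (Suc j)"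
        using decp[OF c(1)] r jp1
        by (intro fs.subspace_add[OF ch_subspace] fs.subspace_scale[OF ch_subspace]) auto
      ultimately show "z \<in> bd K n X j" unfolding bd_def by blast
    qed
  qed
  show ?thesis
  proof (cases "j = p")
    case True
    then show ?thesis unfolding hom_def using cycp bdp by simp
  next
    case jp: False
    show ?thesis
    proof (cases "j = Suc p")
      case True
      then show ?thesis unfolding hom_def using cycSp bdSp by simp
    next
      case False
      then have cyceq: "cyc K n ?X' j = cyc K n X j" using other[of j] jp unfolding cyc_def by simp
      show ?thesis
      proof (cases "Suc j = p")
        case True
        then show ?thesis unfolding hom_def using cyceq bdpm by simp
      next
        case False
        then have "bd K n ?X' j = bd K n X j" using other[of "Suc j"] jp unfolding bd_def by simp
        then show ?thesis unfolding hom_def using cyceq by simp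
      qed
    qed
  qed
qed


lemma hom_cone:
  fixes K :: "'a::field itself"
  assumes "dc n X" "dc n Y" "X \<subseteq> Y" "b \<in> {1..n}"
    and "\<forall>F\<in>Y - X. insert b F \<in> Y - X \<and> F - {b} \<in> Y - X"
  shows "hom K n Y j = hom K n X j"
  using assms
proof (induction "card (Y - X)" arbitrary: X rule: less_induct)
  case less
  note dcX = less.prems(1) and dcY = less.prems(2) and XY = less.prems(3) and b = less.prems(4)
    and tog = less.prems(5)
  have finY: "finite Y" using dc_finite[OF dcY] .
  have Ysub: "\<forall>F\<in>Y. F \<subseteq> {1..n}" and Yface: "\<forall>F\<in>Y. \<forall>x\<in>F. F - {x} \<in> Y"
    using dcY unfolding dc_def by auto
  have Xface: "\<forall>F\<in>X. \<forall>x\<in>F. F - {x} \<in> X"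
    using dcX unfolding dc_def by auto
  show ?case
  proof (cases "Y - X = {}")
    case True
    then have "Y = X" using XY by blast
    then show ?thesis by simp
  next
    case False
    define N where "N = Y - X"
    define M where "M = {F \<in> N. b \<notin> F}"
    obtain F0 where "F0 \<in> N" using False N_def by blast
    then have "F0 - {b} \<in> M" using tog unfolding M_def N_def by blast
    then have Mne: "M \<noteq> {}" by blast
    have finM: "finite M" unfolding M_def N_def using finY by simp
    define m0 where "m0 = Min (card ` M)"
    have "m0 \<in> card ` M" unfolding m0_def using finM Mne by simp
    then obtain F where FM: "F \<in> M" and cF: "card F = m0" by blast
    have minF: "card F \<le> card F'" if "F' \<in> M" for F'
      using that finM cF unfolding m0_def by simp
    have FN: "F \<in> N" and bF: "b \<notin> F" using FM unfolding M_def by auto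
    have bFN: "insert b F \<in> N" using tog FN unfolding N_def by blast
    have FY: "F \<in> Y" "insert b F \<in> Y" "F \<notin> X" "insert b F \<notin> X" using FN bFN unfolding N_def by auto
    have finF: "finite F" using dc_fin_el[OF dcY FY(1)] .
    define X1 where "X1 = insert F (insert (insert b F) X)"
    have faceF: "F - {x} \<in> X" if "x \<in> F" for x
    proof -
      have "F - {x} \<in> Y" using Yface FY(1) that by blast
      moreover have "F - {x} \<notin> M"
      proof
        assume "F - {x} \<in> M"
        then have "card F \<le> card (F - {x})" using minF by blast
        moreover have "card (F - {x}) < card F" using finF that by (intro card_Diff1_less)
        ultimately show False by simp
      qed
      ultimately show ?thesis unfolding M_def N_def using bF by blast
    qed
    have dcX1: "dc n X1"
      unfolding dc_def
    proof (intro conjI ballI)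
      fix H assume "H \<in> X1"
      then have "H \<in> Y" using FY XY unfolding X1_def by blast
      then show "H \<subseteq> {1..n}" using Ysub by blast
    next
      fix H x assume H: "H \<in> X1" and x: "x \<in> H"
      show "H - {x} \<in> X1"
      proof (cases "H \<in> X")
        case True
        then have "H - {x} \<in> X" using Xface x by blast
        then show ?thesis unfolding X1_def by blast
      next
        case False
        then have "H = F \<or> H = insert b F" using H unfolding X1_def by blast
        then show ?thesis
        proof
          assume "H = F"
          then show ?thesis using faceF x unfolding X1_def by blast
        next
          assume Hb: "H = insert b F"
          show ?thesis
          proof (cases "x = b")
            case True
            then have "H - {x} = F" using Hb bF by blast
            then show ?thesis unfolding X1_def by blast
          next
            case False
            then have xF: "x \<in> F" using x Hb by simp
            have eq: "H - {x} = insert b (F - {x})" using Hb False by blast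
            have "H - {x} \<in> Y" using Yface FY(2) Hb x by blast
            then have "insert b (F - {x}) \<in> Y" using eq by simp
            moreover have "insert b (F - {x}) \<notin> N"
            proof
              assume "insert b (F - {x}) \<in> N"
              then have "insert b (F - {x}) - {b} \<in> N" using conjunct2[OF bspec[OF tog]] unfolding N_def by blast
              moreover have "insert b (F - {x}) - {b} = F - {x}" using bF by blast
              ultimately have "F - {x} \<in> N" by simp
              moreover have "F - {x} \<in> X" using faceF xF .
              ultimately show False unfolding N_def by blast
            qed
            ultimately have "insert b (F - {x}) \<in> X" unfolding N_def by blast
            then show ?thesis unfolding eq X1_def by blast
          qed
        qed
      qed
    qed
    have step1: "hom K n X1 j = hom K n X j"
      unfolding X1_def
      by (rule hom_pair[OF dcX _ refl bF b FY(3) FY(4)]) (use dcX1 in \<open>simp add: X1_def\<close>)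
    have X1Y: "X1 \<subseteq> Y" using XY FY unfolding X1_def by blast
    have YX1: "Y - X1 = N - {F, insert b F}" unfolding X1_def N_def by blast
    have tog1: "\<forall>H\<in>Y - X1. insert b H \<in> Y - X1 \<and> H - {b} \<in> Y - X1"
    proof
      fix H assume "H \<in> Y - X1"
      then have HN: "H \<in> N" and HF: "H \<noteq> F" "H \<noteq> insert b F" unfolding YX1 by auto
      have "insert b H \<in> N" "H - {b} \<in> N" using tog HN unfolding N_def by auto
      moreover have "insert b H \<noteq> F" using bF by blast
      moreover have "insert b H \<noteq> insert b F"
      proof
        assume e: "insert b H = insert b F"
        show False
        proof (cases "b \<in> H")
          case True
          then show False using e HF by (simp add: insert_absorb)
        next
          case False
          then have "H = insert b H - {b}" by simp
          also have "\<dots> = insert b F - {b}" using e by simp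
          also have "\<dots> = F" using bF by simp
          finally show False using HF by simp
        qed
      qed
      moreover have "H - {b} \<noteq> insert b F" by blast
      moreover have "H - {b} \<noteq> F"
      proof
        assume e: "H - {b} = F"
        show False
        proof (cases "b \<in> H")
          case True
          then have "H = insert b (H - {b})" by blast
          then show False using e HF by simp
        next
          case False
          then show False using e HF by simp
        qed
      qed
      ultimately show "insert b H \<in> Y - X1 \<and> H - {b} \<in> Y - X1" unfolding YX1 by blast
    qed
    have lt: "card (Y - X1) < card (Y - X)"
    proof -
      have "Y - X1 \<subset> Y - X" using YX1 FN unfolding N_def by blast
      then show ?thesis using finY by (simp add: psubset_card_mono)
    qed
    have "hom K n Y j = hom K n X1 j"
      by (rule less.hyps[OF lt dcX1 dcY X1Y b tog1])
    then show ?thesis using step1 by simp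
  qed
qed

definition ind :: "nat set \<Rightarrow> nat \<Rightarrow> nat" where
  "ind A = (\<lambda>k. if k \<in> A then 1 else 0)"

definition wF :: "monomial \<Rightarrow> nat set \<Rightarrow> monomial" where
  "wF a F = (\<lambda>k. a k - ind F k)"

definition Dl :: "nat \<Rightarrow> monomial set \<Rightarrow> monomial \<Rightarrow> nat set set" where
  "Dl n J a = {F. F \<subseteq> {1..n} \<and> (\<forall>k\<in>F. 0 < a k) \<and> wF a F \<in> J}"

definition idl :: "nat \<Rightarrow> monomial set \<Rightarrow> monomial set" where
  "idl n S = {v \<in> monomials n. \<exists>s\<in>S. s \<le> v}"

definition wt :: "nat \<Rightarrow> monomial \<Rightarrow> nat" where
  "wt n u = (\<Sum>q=1..n. q * u q)"

definition prec :: "nat \<Rightarrow> monomial \<Rightarrow> monomial \<Rightarrow> bool" where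
  "prec n g u \<longleftrightarrow> mdeg n g < mdeg n u \<or> (mdeg n g = mdeg n u \<and> wt n g < wt n u)"

definition cnt :: "nat \<Rightarrow> monomial set \<Rightarrow> monomial \<Rightarrow> nat \<Rightarrow> nat" where
  "cnt n S a j = card {(s, B). s \<in> S \<and> B \<subseteq> {1..<mmax s} \<and> card B = j \<and> a = s + ind B}"

definition upcl :: "nat \<Rightarrow> monomial set \<Rightarrow> bool" where
  "upcl n J \<longleftrightarrow> J \<subseteq> monomials n \<and> (\<forall>u\<in>J. \<forall>v\<in>monomials n. u \<le> v \<longrightarrow> v \<in> J)"

lemma ind_apply: "ind A k = (if k \<in> A then 1 else 0)"
  by (simp add: ind_def)

lemma monomials_zero: "u \<in> monomials n \<Longrightarrow> (k = 0 \<or> n < k) \<Longrightarrow> u k = 0"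
  unfolding monomials_def by force

lemma monomialsI: "(\<And>k. u k \<noteq> 0 \<Longrightarrow> 1 \<le> k \<and> k \<le> n) \<Longrightarrow> u \<in> monomials n"
  unfolding monomials_def by auto

lemma le_funD: "(u :: monomial) \<le> v \<Longrightarrow> u k \<le> v k"
  by (simp add: le_fun_def)

lemma mdeg_mono: "(u :: monomial) \<le> v \<Longrightarrow> mdeg n u \<le> mdeg n v"
  unfolding mdeg_def by (intro sum_mono) (simp add: le_fun_def)

lemma mono_eq:
  assumes "u \<in> monomials n" "v \<in> monomials n" "u \<le> v" "mdeg n v \<le> mdeg n u"
  shows "u = v"
proof (rule ccontr)
  assume "u \<noteq> v"
  then obtain k where k: "u k \<noteq> v k" by (auto simp: fun_eq_iff)
  have "k \<in> {1..n}"
  proof (rule ccontr)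
    assume "k \<notin> {1..n}"
    then have "k = 0 \<or> n < k" by auto
    then show False using k monomials_zero assms(1,2) by metis
  qed
  moreover have "u k < v k" using k assms(3) le_funD[OF assms(3), of k] by simp
  ultimately have "mdeg n u < mdeg n v"
    unfolding mdeg_def using assms(3)
    by (intro sum_strict_mono_ex1) (auto simp: le_fun_def)
  then show False using assms(4) by simp
qed

lemma mono_lt:
  assumes "u \<in> monomials n" "v \<in> monomials n" "u \<le> v" "u \<noteq> v"
  shows "mdeg n u < mdeg n v"
  using mono_eq[OF assms(1-3)] assms(4) by linarith

lemma mdeg_add: "mdeg n (u + v) = mdeg n u + mdeg n v"
  unfolding mdeg_def by (simp add: sum.distrib)

lemma mdeg_ind: "B \<subseteq> {1..n} \<Longrightarrow> mdeg n (ind B) = card B"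
proof -
  assume B: "B \<subseteq> {1..n}"
  have "mdeg n (ind B) = (\<Sum>k\<in>{1..n}. if k \<in> B then 1 else 0)"
    unfolding mdeg_def ind_def by simp
  also have "\<dots> = card ({1..n} \<inter> B)" by (simp add: sum.If_cases)
  also have "{1..n} \<inter> B = B" using B by blast
  finally show ?thesis .
qed

lemma sum_upd_nat:
  assumes "finite A" "q \<in> A"
  shows "sum (f(q := y)) A + (f q :: nat) = sum f A + y"
proof -
  have "sum (f(q := y)) A = y + sum (f(q := y)) (A - {q})" using assms by (simp add: sum.remove)
  moreover have "sum f A = f q + sum f (A - {q})" using assms by (simp add: sum.remove)
  moreover have "sum (f(q := y)) (A - {q}) = sum f (A - {q})" by (intro sum.cong) auto
  ultimately show ?thesis by simp
qed

lemma sum_upd_out: "q \<notin> A \<Longrightarrow> sum (f(q := y)) A = sum f A"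
  by (intro sum.cong) auto

definition mv :: "monomial \<Rightarrow> nat \<Rightarrow> nat \<Rightarrow> monomial" where
  "mv u i j = (u(j := u j - 1))(i := u i + 1)"

lemma mv_apply: "i \<noteq> j \<Longrightarrow> mv u i j k = (if k = i then u i + 1 else if k = j then u j - 1 else u k)"
  by (simp add: mv_def)

lemma mdeg_mv:
  assumes "i \<noteq> j" "i \<in> {1..n}" "j \<in> {1..n}" "0 < u j"
  shows "mdeg n (mv u i j) = mdeg n u"
proof -
  have "mdeg n (mv u i j) + (u(j := u j - 1)) i = mdeg n (u(j := u j - 1)) + (u i + 1)"
    unfolding mdeg_def mv_def using assms sum_upd_nat[of "{1..n}" i "u(j := u j - 1)" "u i + 1"] by simp
  moreover have "mdeg n (u(j := u j - 1)) + u j = mdeg n u + (u j - 1)"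
    unfolding mdeg_def using assms sum_upd_nat[of "{1..n}" j u "u j - 1"] by simp
  ultimately show ?thesis using assms by simp
qed

lemma wt_mv:
  assumes "i \<noteq> j" "i \<in> {1..n}" "j \<in> {1..n}" "0 < u j"
  shows "wt n (mv u i j) + j = wt n u + i"
proof -
  let ?f = "\<lambda>q. q * u q"
  let ?g = "?f(j := j * (u j - 1))"
  have e1: "(\<lambda>q. q * mv u i j q) = ?g(i := i * (u i + 1))"
    using assms(1) by (auto simp: mv_apply fun_eq_iff)
  have E1: "wt n (mv u i j) + ?g i = sum ?g {1..n} + i * (u i + 1)"
    unfolding wt_def e1 using assms sum_upd_nat[of "{1..n}" i ?g "i * (u i + 1)"] by simp
  have E2: "sum ?g {1..n} + j * u j = wt n u + j * (u j - 1)"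
    unfolding wt_def using assms sum_upd_nat[of "{1..n}" j ?f "j * (u j - 1)"] by simp
  have E3: "j * u j = j * (u j - 1) + j" using assms(4) by (cases "u j") auto
  have E4: "?g i = i * u i" using assms(1) by simp
  have E5: "i * (u i + 1) = i * u i + i" by simp
  show ?thesis using E1 E2 E3 E4 E5 by linarith
qed

lemma mv_monomials:
  assumes "u \<in> monomials n" "i \<in> {1..n}" "i \<noteq> j"
  shows "mv u i j \<in> monomials n"
proof (rule monomialsI)
  fix k assume k: "mv u i j k \<noteq> 0"
  show "1 \<le> k \<and> k \<le> n"
  proof (cases "k = i")
    case True
    then show ?thesis using assms(2) by simp
  next
    case False
    then have "u k \<noteq> 0" using k assms(3) by (auto simp: mv_apply split: if_splits)
    then show ?thesis using assms(1) unfolding monomials_def by auto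
  qed
qed

lemma ss_upcl: "strongly_stable n J \<Longrightarrow> upcl n J"
  unfolding strongly_stable_def monomial_ideal_def upcl_def by blast

lemma ss_mv:
  assumes "strongly_stable n J" "u \<in> J" "0 < u j" "1 \<le> i" "i < j"
  shows "mv u i j \<in> J"
  using assms unfolding strongly_stable_def mv_def by blast

lemma gens_sub: "gens J \<subseteq> J"
  unfolding gens_def by auto

lemma gens_min: "u \<in> gens J \<Longrightarrow> v \<in> J \<Longrightarrow> v \<le> u \<Longrightarrow> v = u"
  unfolding gens_def by auto

lemma exists_gen:
  assumes "upcl n J" "v \<in> J"
  shows "\<exists>g\<in>gens J. g \<le> v"
  using assms(2)
proof (induction "mdeg n v" arbitrary: v rule: less_induct)
  case less
  show ?case
  proof (cases "v \<in> gens J")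
    case True
    then show ?thesis by auto
  next
    case False
    then obtain w where w: "w \<in> J" "w \<le> v" "w \<noteq> v" using less.prems unfolding gens_def by auto
    have "mdeg n w < mdeg n v"
      using mono_lt[OF _ _ w(2,3)] w(1) less.prems assms(1) unfolding upcl_def by blast
    then obtain g where "g \<in> gens J" "g \<le> w" using less.hyps w(1) by blast
    then show ?thesis using w(2) order_trans by blast
  qed
qed

lemma idl_gens:
  assumes "upcl n J"
  shows "idl n (gens J) = J"
proof
  have up: "\<forall>u\<in>J. \<forall>v\<in>monomials n. u \<le> v \<longrightarrow> v \<in> J" and sub: "J \<subseteq> monomials n"
    using assms unfolding upcl_def by auto
  show "idl n (gens J) \<subseteq> J"
  proof
    fix v assume "v \<in> idl n (gens J)"
    then obtain g where "v \<in> monomials n" "g \<in> gens J" "g \<le> v" unfolding idl_def by blast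
    then show "v \<in> J" using up gens_sub by blast
  qed
  show "J \<subseteq> idl n (gens J)"
  proof
    fix v assume v: "v \<in> J"
    obtain g where "g \<in> gens J" "g \<le> v" using exists_gen[OF assms v] by blast
    then show "v \<in> idl n (gens J)" using v sub unfolding idl_def by blast
  qed
qed

lemma idl_upcl: "upcl n (idl n S)"
  unfolding upcl_def idl_def using order_trans by blast

lemma mmax_facts:
  assumes "u \<in> monomials n" "0 < mdeg n u"
  shows "u (mmax u) > 0" "1 \<le> mmax u" "mmax u \<le> n" "\<And>k. mmax u < k \<Longrightarrow> u k = 0"
proof -
  have fin: "finite {i. u i \<noteq> 0}"
    by (rule finite_subset[of _ "{1..n}"]) (use assms(1) in \<open>auto simp: monomials_def\<close>)
  have ne: "{i. u i \<noteq> 0} \<noteq> {}"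
  proof
    assume "{i. u i \<noteq> 0} = {}"
    then have "mdeg n u = 0" unfolding mdeg_def by auto
    then show False using assms(2) by simp
  qed
  have mem: "mmax u \<in> {i. u i \<noteq> 0}" unfolding mmax_def using Max_in[OF fin ne] .
  then show "u (mmax u) > 0" by simp
  show "1 \<le> mmax u" "mmax u \<le> n" using mem assms(1) unfolding monomials_def by auto
  show "u k = 0" if "mmax u < k" for k
  proof (rule ccontr)
    assume "u k \<noteq> 0"
    then have "k \<le> mmax u" unfolding mmax_def using Max_ge[OF fin] by simp
    then show False using that by simp
  qed
qed

lemma colon_down:
  assumes SS: "strongly_stable n J" and u: "u \<in> gens J" and pos: "0 < mdeg n u"
  shows "g \<in> J \<Longrightarrow> mdeg n g < mdeg n u \<Longrightarrow> \<forall>p. 1 \<le> p \<and> p < mmax u \<longrightarrow> g p \<le> u p \<Longrightarrow> False"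
proof (induction "(\<Sum>q\<in>{mmax u<..n}. 2 * g q) + g (mmax u)" arbitrary: g rule: less_induct)
  case (less g)
  define m where "m = mmax u"
  have up: "upcl n J" using ss_upcl[OF SS] .
  have uJ: "u \<in> J" using u gens_sub by blast
  have umon: "u \<in> monomials n" using up uJ unfolding upcl_def by blast
  have gmon: "g \<in> monomials n" using up less.prems(1) unfolding upcl_def by blast
  have m1: "1 \<le> m" and mn: "m \<le> n" and uz: "\<And>k. m < k \<Longrightarrow> u k = 0"
    using mmax_facts[OF umon pos] unfolding m_def by auto
  have gle: "g p \<le> u p" if "1 \<le> p" "p < m" for p using less.prems(3) that unfolding m_def by blast
  show False
  proof (cases "\<exists>q\<in>{m<..n}. 0 < g q")
    case True
    then obtain q where q: "q \<in> {m<..n}" "0 < g q" by blast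
    define g' where "g' = mv g m q"
    have mq: "m \<noteq> q" using q by simp
    have g'J: "g' \<in> J" unfolding g'_def using ss_mv[OF SS less.prems(1) q(2) m1] q by simp
    have dg': "mdeg n g' = mdeg n g" unfolding g'_def using mdeg_mv[of m q n g] mq q m1 mn by simp
    have g'p: "\<forall>p. 1 \<le> p \<and> p < mmax u \<longrightarrow> g' p \<le> u p"
      using gle q mq unfolding g'_def m_def[symmetric] by (auto simp: mv_apply)
    have s1: "(\<Sum>q'\<in>{m<..n}. 2 * g' q') = (\<Sum>q'\<in>{m<..n}. ((\<lambda>q'. 2 * g q')(q := 2 * (g q - 1))) q')"
      unfolding g'_def by (intro sum.cong refl) (auto simp: mv_apply mq)
    have s2: "(\<Sum>q'\<in>{m<..n}. ((\<lambda>q'. 2 * g q')(q := 2 * (g q - 1))) q') + 2 * g q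
        = (\<Sum>q'\<in>{m<..n}. 2 * g q') + 2 * (g q - 1)"
      using sum_upd_nat[of "{m<..n}" q "\<lambda>q'. 2 * g q'" "2 * (g q - 1)"] q by simp
    have s3: "g' m = g m + 1" unfolding g'_def by (simp add: mv_apply mq)
    have lt: "(\<Sum>q\<in>{mmax u<..n}. 2 * g' q) + g' (mmax u) < (\<Sum>q\<in>{mmax u<..n}. 2 * g q) + g (mmax u)"
      using s1 s2 s3 q(2) unfolding m_def[symmetric] by linarith
    show False using less.hyps[OF lt g'J] dg' less.prems(2) g'p by simp
  next
    case False
    then have gz: "\<And>q. m < q \<Longrightarrow> q \<le> n \<Longrightarrow> g q = 0" by auto
    show False
    proof (cases "g m \<le> u m")
      case True
      have "g \<le> u"
        unfolding le_fun_def
      proof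
        fix k
        show "g k \<le> u k"
        proof (cases "k = 0 \<or> n < k")
          case True
          then show ?thesis using monomials_zero[OF gmon] by simp
        next
          case False
          then have k: "1 \<le> k" "k \<le> n" by auto
          consider "k < m" | "k = m" | "m < k" by linarith
          then show ?thesis
          proof cases
            case 1 then show ?thesis using gle k by simp
          next
            case 2 then show ?thesis using True by simp
          next
            case 3 then show ?thesis using gz k by simp
          qed
        qed
      qed
      then have "g = u" using gens_min[OF u less.prems(1)] by simp
      then show False using less.prems(2) by simp
    next
      case False
      have "\<exists>p. 1 \<le> p \<and> p < m \<and> g p < u p"
      proof (rule ccontr)
        assume "\<not> ?thesis"
        then have "\<forall>k\<in>{1..n}. u k \<le> g k" using False uz by (metis atLeastAtMost_iff linorder_neqE_nat not_le_imp_less less_or_eq_imp_le zero_le)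
        then have "mdeg n u \<le> mdeg n g" unfolding mdeg_def by (intro sum_mono) auto
        then show False using less.prems(2) by simp
      qed
      then obtain p where p: "1 \<le> p" "p < m" "g p < u p" by blast
      define g' where "g' = mv g p m"
      have pm: "p \<noteq> m" using p by simp
      have gm: "0 < g m" using False by simp
      have g'J: "g' \<in> J" unfolding g'_def using ss_mv[OF SS less.prems(1) gm p(1,2)] .
      have dg': "mdeg n g' = mdeg n g" unfolding g'_def using mdeg_mv[of p m n g] pm gm p m1 mn by simp
      have g'p: "\<forall>p'. 1 \<le> p' \<and> p' < mmax u \<longrightarrow> g' p' \<le> u p'"
        using gle p pm unfolding g'_def m_def[symmetric] by (auto simp: mv_apply)
      have s1: "(\<Sum>q'\<in>{m<..n}. 2 * g' q') = (\<Sum>q'\<in>{m<..n}. 2 * g q')"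
        unfolding g'_def using p by (intro sum.cong refl) (auto simp: mv_apply pm)
      have s3: "g' m = g m - 1" unfolding g'_def using pm by (simp add: mv_apply)
      have lt: "(\<Sum>q\<in>{mmax u<..n}. 2 * g' q) + g' (mmax u) < (\<Sum>q\<in>{mmax u<..n}. 2 * g q) + g (mmax u)"
        using s1 s3 gm unfolding m_def[symmetric] by linarith
      show False using less.hyps[OF lt g'J] dg' less.prems(2) g'p by simp
    qed
  qed
qed

lemma wt_eq:
  assumes gm: "g \<in> monomials n" and um: "u \<in> monomials n" and m: "1 \<le> m" "m \<le> n"
    and uz: "\<forall>k. m < k \<longrightarrow> u k = 0"
    and gle: "\<forall>p. 1 \<le> p \<and> p < m \<longrightarrow> g p \<le> u p"
    and dg: "mdeg n g = mdeg n u" and wg: "wt n g \<le> wt n u"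
  shows "g = u"
proof -
  define T where "T q = (int q - int m) * (int (g q) - int (u q))" for q
  have Tnn: "0 \<le> T q" if "q \<in> {1..n}" for q
  proof -
    consider "q < m" | "q = m" | "m < q" by linarith
    then show ?thesis
    proof cases
      case 1
      then have "int (g q) - int (u q) \<le> 0" "int q - int m \<le> 0" using gle that by auto
      then show ?thesis unfolding T_def by (simp add: mult_nonpos_nonpos)
    next
      case 2 then show ?thesis unfolding T_def by simp
    next
      case 3
      then have "0 \<le> int (g q) - int (u q)" "0 \<le> int q - int m" using uz by auto
      then show ?thesis unfolding T_def by simp
    qed
  qed
  have sumT: "(\<Sum>q\<in>{1..n}. T q) = (int (wt n g) - int (wt n u)) - int m * (int (mdeg n g) - int (mdeg n u))"
  proof -
    have "(\<Sum>q\<in>{1..n}. T q) = (\<Sum>q\<in>{1..n}. int q * int (g q)) - (\<Sum>q\<in>{1..n}. int q * int (u q))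
        - int m * ((\<Sum>q\<in>{1..n}. int (g q)) - (\<Sum>q\<in>{1..n}. int (u q)))"
      unfolding T_def by (simp add: algebra_simps sum_subtractf sum.distrib sum_distrib_left)
    moreover have "int (wt n g) = (\<Sum>q\<in>{1..n}. int q * int (g q))" "int (wt n u) = (\<Sum>q\<in>{1..n}. int q * int (u q))"
      unfolding wt_def by (simp_all add: of_nat_sum)
    moreover have "int (mdeg n g) = (\<Sum>q\<in>{1..n}. int (g q))" "int (mdeg n u) = (\<Sum>q\<in>{1..n}. int (u q))"
      unfolding mdeg_def by (simp_all add: of_nat_sum)
    ultimately show ?thesis by simp
  qed
  then have "(\<Sum>q\<in>{1..n}. T q) \<le> 0" using dg wg by simp
  moreover have "0 \<le> (\<Sum>q\<in>{1..n}. T q)" using Tnn by (intro sum_nonneg) auto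
  ultimately have "(\<Sum>q\<in>{1..n}. T q) = 0" by simp
  then have T0: "\<forall>q\<in>{1..n}. T q = 0" using Tnn sum_nonneg_eq_0_iff[of "{1..n}" T] by auto
  have eqo: "g q = u q" if "q \<in> {1..n}" "q \<noteq> m" for q
  proof -
    have "T q = 0" using T0 that by blast
    moreover have "int q - int m \<noteq> 0" using that by simp
    ultimately show ?thesis unfolding T_def by simp
  qed
  have mm: "m \<in> {1..n}" using m by simp
  have "mdeg n g = g m + (\<Sum>q\<in>{1..n} - {m}. g q)" unfolding mdeg_def using mm by (simp add: sum.remove)
  moreover have "mdeg n u = u m + (\<Sum>q\<in>{1..n} - {m}. u q)" unfolding mdeg_def using mm by (simp add: sum.remove)
  moreover have "(\<Sum>q\<in>{1..n} - {m}. g q) = (\<Sum>q\<in>{1..n} - {m}. u q)" using eqo by (intro sum.cong) auto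
  ultimately have "g m = u m" using dg by simp
  show "g = u"
  proof
    fix k
    show "g k = u k"
    proof (cases "k \<in> {1..n}")
      case True
      then show ?thesis using eqo \<open>g m = u m\<close> by (cases "k = m") auto
    next
      case False
      then have "k = 0 \<or> n < k" by auto
      then show ?thesis using monomials_zero[OF gm] monomials_zero[OF um] by metis
    qed
  qed
qed

definition dcl :: "nat \<Rightarrow> monomial set \<Rightarrow> monomial set \<Rightarrow> bool" where
  "dcl n J S \<longleftrightarrow> (\<forall>g\<in>gens J. \<forall>s\<in>S. prec n g s \<longrightarrow> g \<in> S)"

lemma prec_irrefl: "\<not> prec n u u"
  unfolding prec_def by simp

lemma colon_up:
  assumes SS: "strongly_stable n J" and pos: "\<forall>u\<in>gens J. 0 < mdeg n u"
    and S: "S \<subseteq> gens J" and dS: "dcl n J S" and uS: "u \<in> S"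
    and w: "w \<in> monomials n" "u \<le> w" and p: "1 \<le> p" "p < mmax u" "u p < w p"
  shows "w \<in> idl n (S - {u})"
proof -
  define m where "m = mmax u"
  have up: "upcl n J" using ss_upcl[OF SS] .
  have ug: "u \<in> gens J" using S uS by blast
  have uJ: "u \<in> J" using ug gens_sub by blast
  have umon: "u \<in> monomials n" using up uJ unfolding upcl_def by blast
  have m1: "1 \<le> m" and mn: "m \<le> n" and um0: "0 < u m"
    using mmax_facts[OF umon] pos ug unfolding m_def by auto
  have pm: "p \<noteq> m" "p < m" using p unfolding m_def by auto
  define v where "v = mv u p m"
  have vJ: "v \<in> J" unfolding v_def using ss_mv[OF SS uJ um0 p(1) pm(2)] .
  have vmon: "v \<in> monomials n" using up vJ unfolding upcl_def by blast
  have dv: "mdeg n v = mdeg n u" unfolding v_def using mdeg_mv[of p m n u] pm um0 p m1 mn by simp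
  have wv: "wt n v + m = wt n u + p" unfolding v_def using wt_mv[of p m n u] pm um0 p m1 mn by simp
  obtain g where g: "g \<in> gens J" "g \<le> v" using exists_gen[OF up vJ] by blast
  have gmon: "g \<in> monomials n" using g gens_sub up unfolding upcl_def by blast
  have "prec n g u"
  proof (cases "mdeg n g < mdeg n u")
    case True then show ?thesis unfolding prec_def by simp
  next
    case False
    then have "mdeg n v \<le> mdeg n g" using dv by simp
    then have "g = v" using mono_eq[OF gmon vmon g(2)] by simp
    then show ?thesis unfolding prec_def using dv wv pm by simp
  qed
  then have gS: "g \<in> S" using dS g(1) uS unfolding dcl_def by blast
  have gu: "g \<noteq> u" using \<open>prec n g u\<close> prec_irrefl by metis
  have "v \<le> w"
    unfolding le_fun_def
  proof
    fix k
    show "v k \<le> w k"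
      using le_funD[OF w(2), of k] p(3) pm unfolding v_def by (auto simp: mv_apply)
  qed
  then have "g \<le> w" using g(2) by simp
  then show ?thesis unfolding idl_def using w gS gu by blast
qed

lemma new_char:
  assumes SS: "strongly_stable n J" and pos: "\<forall>u\<in>gens J. 0 < mdeg n u"
    and S: "S \<subseteq> gens J" and dS: "dcl n J S" and uS: "u \<in> S"
    and mx: "\<forall>v\<in>S. \<not> prec n u v" and w: "w \<in> monomials n"
  shows "(w \<in> idl n S \<and> w \<notin> idl n (S - {u})) \<longleftrightarrow> (u \<le> w \<and> (\<forall>p. 1 \<le> p \<and> p < mmax u \<longrightarrow> w p \<le> u p))"
proof
  assume L: "w \<in> idl n S \<and> w \<notin> idl n (S - {u})"
  then obtain s where s: "s \<in> S" "s \<le> w" unfolding idl_def by blast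
  have "s = u"
  proof (rule ccontr)
    assume "s \<noteq> u"
    then have "w \<in> idl n (S - {u})" using s w unfolding idl_def by blast
    then show False using L by blast
  qed
  then have uw: "u \<le> w" using s by simp
  moreover have "\<forall>p. 1 \<le> p \<and> p < mmax u \<longrightarrow> w p \<le> u p"
  proof (intro allI impI)
    fix p assume p: "1 \<le> p \<and> p < mmax u"
    show "w p \<le> u p"
    proof (rule ccontr)
      assume "\<not> w p \<le> u p"
      then have "u p < w p" by simp
      then have "w \<in> idl n (S - {u})" using colon_up[OF SS pos S dS uS w uw] p by blast
      then show False using L by blast
    qed
  qed
  ultimately show "u \<le> w \<and> (\<forall>p. 1 \<le> p \<and> p < mmax u \<longrightarrow> w p \<le> u p)" by blast
next
  assume R: "u \<le> w \<and> (\<forall>p. 1 \<le> p \<and> p < mmax u \<longrightarrow> w p \<le> u p)"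
  have up: "upcl n J" using ss_upcl[OF SS] .
  have ug: "u \<in> gens J" using S uS by blast
  have uJ: "u \<in> J" using ug gens_sub by blast
  have umon: "u \<in> monomials n" using up uJ unfolding upcl_def by blast
  have posu: "0 < mdeg n u" using pos ug by blast
  have "w \<in> idl n S" using R uS w unfolding idl_def by blast
  moreover have "w \<notin> idl n (S - {u})"
  proof
    assume "w \<in> idl n (S - {u})"
    then obtain g where g: "g \<in> S" "g \<noteq> u" "g \<le> w" unfolding idl_def by blast
    have gg: "g \<in> gens J" using g S by blast
    have gJ: "g \<in> J" using gg gens_sub by blast
    have gmon: "g \<in> monomials n" using gJ up unfolding upcl_def by blast
    have gle: "\<forall>p. 1 \<le> p \<and> p < mmax u \<longrightarrow> g p \<le> u p"
      using R le_funD[OF g(3)] order_trans by blast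
    have np: "\<not> prec n u g" using mx g(1) by blast
    then have "mdeg n g \<le> mdeg n u" unfolding prec_def by simp
    show False
    proof (cases "mdeg n g < mdeg n u")
      case True
      then show False using colon_down[OF SS ug posu gJ _ gle] by simp
    next
      case False
      then have dg: "mdeg n g = mdeg n u" using \<open>mdeg n g \<le> mdeg n u\<close> by simp
      then have "wt n g \<le> wt n u" using np unfolding prec_def by simp
      then have "g = u"
        using wt_eq[OF gmon umon _ _ _ gle dg] mmax_facts[OF umon posu] by auto
      then show False using g(2) by simp
    qed
  qed
  ultimately show "w \<in> idl n S \<and> w \<notin> idl n (S - {u})" by blast
qed

lemma wF_apply: "wF a F k = a k - ind F k"
  by (simp add: wF_def)

lemma wF_mon: "a \<in> monomials n \<Longrightarrow> wF a F \<in> monomials n"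
  by (rule monomialsI) (auto simp: wF_apply monomials_def)

lemma Dl_dc:
  assumes up: "upcl n T" and a: "a \<in> monomials n"
  shows "dc n (Dl n T a)"
  unfolding dc_def
proof (intro conjI ballI)
  fix F assume "F \<in> Dl n T a"
  then show "F \<subseteq> {1..n}" unfolding Dl_def by simp
next
  fix F x assume F: "F \<in> Dl n T a" and x: "x \<in> F"
  have "wF a F \<le> wF a (F - {x})" unfolding le_fun_def by (auto simp: wF_apply ind_apply)
  moreover have "wF a F \<in> T" using F unfolding Dl_def by simp
  ultimately have "wF a (F - {x}) \<in> T" using up wF_mon[OF a] unfolding upcl_def by blast
  then show "F - {x} \<in> Dl n T a" using F unfolding Dl_def by auto
qed

lemma Dl_mono: "T \<subseteq> T' \<Longrightarrow> Dl n T a \<subseteq> Dl n T' a"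
  unfolding Dl_def by auto

lemma idl_mono: "S \<subseteq> S' \<Longrightarrow> idl n S \<subseteq> idl n S'"
  unfolding idl_def by auto

lemma betti_mg_hom: "betti_mg K n J i a = hom K n (Dl n J a) i"
proof -
  have "kchains K n J a j = ch K (Dl n J a) j" for j
    unfolding kchains_def kbasis_def ch_def Dl_def wF_def ind_def by auto
  then show ?thesis unfolding betti_mg_def hom_def cyc_def bd_def by simp
qed

lemma hom_empty: "hom (K :: 'a::field itself) n {} j = 0"
proof -
  have c: "ch K {} j = {0}" for j unfolding ch_def by (auto simp: fun_eq_iff)
  have "cyc K n {} j = fs.span {}" unfolding cyc_def c by (auto simp: kdiff_def fun_eq_iff)
  moreover have "bd K n {} j = fs.span {}" unfolding bd_def c by (auto simp: kdiff_def fun_eq_iff)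
  ultimately show ?thesis unfolding hom_def by simp
qed

lemma ind_inj: "ind A = ind B \<Longrightarrow> A = B"
  unfolding ind_def by (auto simp: fun_eq_iff) (metis one_neq_zero)+

lemma add_ind_inj: "(u :: monomial) + ind A = u + ind B \<Longrightarrow> A = B"
  by (rule ind_inj) (auto simp: fun_eq_iff)

lemma cnt_fin: "finite S \<Longrightarrow> finite {(s, B). s \<in> S \<and> B \<subseteq> {1..<mmax s} \<and> card B = j \<and> a = s + ind B}"
  by (rule finite_subset[of _ "Sigma S (\<lambda>s. Pow {1..<mmax s})"]) auto

lemma cnt_split:
  assumes "finite S" "u \<in> S"
  shows "cnt n S a j = cnt n (S - {u}) a j
     + (if \<exists>B. B \<subseteq> {1..<mmax u} \<and> card B = j \<and> a = u + ind B then 1 else 0)"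
proof -
  let ?P = "\<lambda>s B. B \<subseteq> {1..<mmax s} \<and> card B = j \<and> a = s + ind B"
  have eq: "{(s, B). s \<in> S \<and> ?P s B} = {(s, B). s \<in> S - {u} \<and> ?P s B} \<union> {(s, B). s = u \<and> ?P s B}"
    using assms by auto
  have fin1: "finite {(s, B). s \<in> S - {u} \<and> ?P s B}" using cnt_fin[of "S - {u}" j a] assms by simp
  have fin2: "finite {(s, B). s = u \<and> ?P s B}"
    by (rule finite_subset[OF _ cnt_fin[OF assms(1), of j a]]) (use assms in auto)
  have c2: "card {(s, B). s = u \<and> ?P s B} = (if \<exists>B. ?P u B then 1 else 0)"
  proof (cases "\<exists>B. ?P u B")
    case True
    then obtain B0 where B0: "?P u B0" by blast
    have "{(s, B). s = u \<and> ?P s B} = {(u, B0)}"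
    proof (intro equalityI subsetI)
      fix x assume "x \<in> {(s, B). s = u \<and> ?P s B}"
      then obtain B where x: "x = (u, B)" "?P u B" by blast
      then have "u + ind B = u + ind B0" using B0 by simp
      then have "B = B0" by (rule add_ind_inj)
      then show "x \<in> {(u, B0)}" using x by simp
    qed (use B0 in auto)
    then show ?thesis using True by simp
  next
    case False
    then have e: "{(s, B). s = u \<and> ?P s B} = {}" by auto
    show ?thesis unfolding e using False by (simp only: if_False card.empty)
  qed
  have "cnt n S a j = card ({(s, B). s \<in> S - {u} \<and> ?P s B} \<union> {(s, B). s = u \<and> ?P s B})"
    unfolding cnt_def eq ..
  also have "\<dots> = card {(s, B). s \<in> S - {u} \<and> ?P s B} + card {(s, B). s = u \<and> ?P s B}"
    by (rule card_Un_disjoint[OF fin1 fin2]) auto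
  finally show ?thesis unfolding c2 cnt_def by simp
qed

lemma EK_step:
  fixes K :: "'a::field itself"
  assumes SS: "strongly_stable n J" and pos: "\<forall>u\<in>gens J. 0 < mdeg n u"
    and S: "S \<subseteq> gens J" "finite S" and dS: "dcl n J S" and uS: "u \<in> S"
    and mx: "\<forall>v\<in>S. \<not> prec n u v" and a: "a \<in> monomials n"
    and IH: "\<forall>j. hom K n (Dl n (idl n (S - {u})) a) j = cnt n (S - {u}) a j"
  shows "hom K n (Dl n (idl n S) a) j = cnt n S a j"
proof -
  define m where "m = mmax u"
  have up: "upcl n J" using ss_upcl[OF SS] .
  have ug: "u \<in> gens J" using S uS by blast
  have uJ: "u \<in> J" using ug gens_sub by blast
  have umon: "u \<in> monomials n" using up uJ unfolding upcl_def by blast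
  have posu: "0 < mdeg n u" using pos ug by blast
  have m1: "1 \<le> m" and mn: "m \<le> n" and uz: "\<And>k. m < k \<Longrightarrow> u k = 0"
    using mmax_facts[OF umon posu] unfolding m_def by auto
  define X where "X = Dl n (idl n (S - {u})) a"
  define Y where "Y = Dl n (idl n S) a"
  have XY: "X \<subseteq> Y" unfolding X_def Y_def by (intro Dl_mono idl_mono) auto
  have dcX: "dc n X" unfolding X_def by (rule Dl_dc[OF idl_upcl a])
  have dcY: "dc n Y" unfolding Y_def by (rule Dl_dc[OF idl_upcl a])
  have char: "F \<in> Y - X \<longleftrightarrow> F \<subseteq> {1..n} \<and> (\<forall>k\<in>F. 0 < a k) \<and> u \<le> wF a F
      \<and> (\<forall>p. 1 \<le> p \<and> p < m \<longrightarrow> wF a F p \<le> u p)" for F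
    using new_char[OF SS pos S(1) dS uS mx wF_mon[OF a, of F]]
    unfolding X_def Y_def Dl_def m_def by auto
  have IHX: "hom K n X j = cnt n (S - {u}) a j" for j using IH unfolding X_def by blast
  have split: "cnt n S a j = cnt n (S - {u}) a j
     + (if \<exists>B. B \<subseteq> {1..<m} \<and> card B = j \<and> a = u + ind B then 1 else 0)" for j
    using cnt_split[OF S(2) uS] unfolding m_def by blast
  show ?thesis
  proof (cases "\<exists>b. m \<le> b \<and> u b < a b")
    case True
    then obtain b where b: "m \<le> b" "u b < a b" by blast
    have ab: "0 < a b" using b by simp
    have "\<not> n < b" using ab monomials_zero[OF a, of b] by auto
    then have bn: "b \<in> {1..n}" using b m1 by simp
    have tog: "\<forall>F\<in>Y - X. insert b F \<in> Y - X \<and> F - {b} \<in> Y - X"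
    proof
      fix F assume F: "F \<in> Y - X"
      have F': "F \<subseteq> {1..n}" "\<forall>k\<in>F. 0 < a k" "u \<le> wF a F" "\<forall>p. 1 \<le> p \<and> p < m \<longrightarrow> wF a F p \<le> u p"
        using F char by blast+
      have w1: "wF a (insert b F) k = (if k = b then a b - 1 else wF a F k)" for k
        by (simp add: wF_apply ind_apply)
      have w2: "wF a (F - {b}) k = (if k = b then a b else wF a F k)" for k
        by (simp add: wF_apply ind_apply)
      have "u \<le> wF a (insert b F)"
        unfolding le_fun_def w1 using F'(3) b(2) by (auto simp: le_fun_def)
      moreover have "\<forall>p. 1 \<le> p \<and> p < m \<longrightarrow> wF a (insert b F) p \<le> u p"
        unfolding w1 using F'(4) b(1) by auto
      moreover have "u \<le> wF a (F - {b})"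
        unfolding le_fun_def w2 using F'(3) b(2) by (auto simp: le_fun_def)
      moreover have "\<forall>p. 1 \<le> p \<and> p < m \<longrightarrow> wF a (F - {b}) p \<le> u p"
        unfolding w2 using F'(4) b(1) by auto
      ultimately show "insert b F \<in> Y - X \<and> F - {b} \<in> Y - X"
        unfolding char using F' bn ab by auto
    qed
    have "hom K n Y j = hom K n X j" by (rule hom_cone[OF dcX dcY XY bn tog])
    moreover have "\<not> (\<exists>B. B \<subseteq> {1..<m} \<and> card B = j \<and> a = u + ind B)"
    proof
      assume "\<exists>B. B \<subseteq> {1..<m} \<and> card B = j \<and> a = u + ind B"
      then obtain B where B: "B \<subseteq> {1..<m}" "a = u + ind B" by blast
      have "b \<notin> B" using B(1) b(1) by auto
      then have "a b = u b" using B(2) by (simp add: ind_apply)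
      then show False using b(2) by simp
    qed
    ultimately show ?thesis using split[of j] IHX unfolding Y_def by simp
  next
    case False
    then have ale: "\<And>b. m \<le> b \<Longrightarrow> a b \<le> u b" by (meson not_le)
    define A0 where "A0 = {p. 1 \<le> p \<and> p < m \<and> u p < a p}"
    have A0sub: "A0 \<subseteq> {1..<m}" unfolding A0_def by auto
    have finA0: "finite A0" using A0sub finite_subset by blast
    have uniq: "B = A0" if "B \<subseteq> {1..<m}" "a = u + ind B" for B
    proof
      show "B \<subseteq> A0" using that unfolding A0_def by (auto simp: ind_apply)
      show "A0 \<subseteq> B"
      proof
        fix p assume "p \<in> A0"
        then have "u p < a p" unfolding A0_def by simp
        then show "p \<in> B" using that(2) by (auto simp: ind_apply split: if_splits)
      qed
    qed
    have claim1: "F = A0 \<and> a = u + ind A0" if F: "F \<in> Y - X" for F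
    proof -
      have F': "F \<subseteq> {1..n}" "\<forall>k\<in>F. 0 < a k" "u \<le> wF a F" "\<forall>p. 1 \<le> p \<and> p < m \<longrightarrow> wF a F p \<le> u p"
        using F char by blast+
      have le: "u k \<le> a k - ind F k" for k using le_funD[OF F'(3), of k] by (simp add: wF_apply)
      have Fm: "k < m" if "k \<in> F" for k
      proof (rule ccontr)
        assume "\<not> k < m"
        then have "a k \<le> u k" using ale by simp
        moreover have "u k \<le> a k - 1" using le[of k] that by (simp add: ind_apply)
        moreover have "0 < a k" using F'(2) that by blast
        ultimately show False by simp
      qed
      have aeq: "a k = u k + ind F k" for k
      proof (cases "k = 0 \<or> n < k")
        case True
        then have "k \<notin> F" using F'(1) by auto
        then show ?thesis using True monomials_zero[OF a] monomials_zero[OF umon] by (simp add: ind_apply)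
      next
        case False
        show ?thesis
        proof (cases "k < m")
          case True
          then have "wF a F k \<le> u k" using F'(4) False by simp
          then have "a k - ind F k = u k" using le[of k] by (simp add: wF_apply)
          moreover have "k \<in> F \<Longrightarrow> 0 < a k" using F'(2) by blast
          ultimately show ?thesis by (auto simp: ind_apply)
        next
          case False
          then have "k \<notin> F" using Fm by blast
          then show ?thesis using ale[of k] le[of k] False by (simp add: ind_apply)
        qed
      qed
      then have aF: "a = u + ind F" by (simp add: fun_eq_iff)
      have "F \<subseteq> {1..<m}" using F'(1) Fm by auto
      then have "F = A0" using uniq aF by blast
      then show ?thesis using aF by simp
    qed
    show ?thesis
    proof (cases "a = u + ind A0")
      case True
      have wA0: "wF a A0 = u" using True by (simp add: fun_eq_iff wF_apply)
      have A0n: "A0 \<subseteq> {1..n}" using A0sub mn by auto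
      have A0pos: "\<forall>k\<in>A0. 0 < a k" unfolding A0_def by auto
      have A0in: "A0 \<in> Y - X"
        unfolding char wA0 using A0n A0pos by simp
      have Yeq: "Y = insert A0 X"
      proof
        show "Y \<subseteq> insert A0 X" using claim1 by blast
        show "insert A0 X \<subseteq> Y" using A0in XY by blast
      qed
      define q where "q = card A0"
      have dcX': "dc n (insert A0 X)" using dcY Yeq by simp
      have A0X: "A0 \<notin> X" using A0in by blast
      have ex: "\<exists>l \<in> ch K X q. kdiff n l = kdiff n (delta A0 :: nat set \<Rightarrow> 'a)"
      proof (cases "q = 0")
        case True
        then have "A0 = {}" using finA0 unfolding q_def by simp
        then have "kdiff n (delta A0 :: nat set \<Rightarrow> 'a) = kdiff n (\<lambda>_. 0)"
          by (auto simp: kdiff_def delta_apply fun_eq_iff)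
        moreover have "(\<lambda>_. 0) \<in> ch K X q" unfolding ch_def by simp
        ultimately show ?thesis by (intro bexI[of _ "\<lambda>_. 0"]) simp_all
      next
        case False
        define z where "z = kdiff n (delta A0 :: nat set \<Rightarrow> 'a)"
        have dA: "(delta A0 :: nat set \<Rightarrow> 'a) \<in> ch K Y (Suc (q - 1))"
          using False Yeq unfolding q_def by (intro delta_ch) auto
        have "z \<in> ch K Y (q - 1)" unfolding z_def using dc_kdiff[OF dcY dA] .
        then have "z \<in> ch K X (q - 1)"
          using ch_insert_other[of A0 "q - 1" K X] False Yeq unfolding q_def by auto
        then have zc: "z \<in> cyc K n X (q - 1)" unfolding cyc_def z_def by (simp add: kdiff_kdiff)
        have "cnt n (S - {u}) a (q - 1) = 0"
        proof -
          have E: "{(s, B). s \<in> S - {u} \<and> B \<subseteq> {1..<mmax s} \<and> card B = q - 1 \<and> a = s + ind B} = {}"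
          proof (rule equals0I)
            fix x assume "x \<in> {(s, B). s \<in> S - {u} \<and> B \<subseteq> {1..<mmax s} \<and> card B = q - 1 \<and> a = s + ind B}"
            then obtain s B where sB: "s \<in> S" "s \<noteq> u" "B \<subseteq> {1..<mmax s}" "card B = q - 1" "a = s + ind B"
              by (cases x) auto
            have sg: "s \<in> gens J" using sB S by blast
            have smon: "s \<in> monomials n" using sg gens_sub up unfolding upcl_def by blast
            have sp: "0 < mdeg n s" using pos sg by blast
            have "mmax s \<le> n" by (rule mmax_facts(3)[OF smon sp])
            then have Bn: "B \<subseteq> {1..n}" using sB(3) by auto
            have d1: "mdeg n a = mdeg n s + (q - 1)"
            proof -
              have "mdeg n a = mdeg n (s + ind B)" by (simp only: sB(5))
              also have "\<dots> = mdeg n s + card B" by (simp only: mdeg_add mdeg_ind[OF Bn])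
              finally show ?thesis using sB(4) by simp
            qed
            have d2: "mdeg n a = mdeg n u + q"
            proof -
              have "mdeg n a = mdeg n (u + ind A0)" by (simp only: True)
              also have "\<dots> = mdeg n u + card A0" by (simp only: mdeg_add mdeg_ind[OF A0n])
              finally show ?thesis unfolding q_def .
            qed
            have "mdeg n u < mdeg n s" using d1 d2 False by linarith
            then have "prec n u s" unfolding prec_def by simp
            then show False using mx sB(1) by blast
          qed
          show ?thesis unfolding cnt_def E by (rule card.empty)
        qed
        then have "hom K n X (q - 1) = 0" using IHX by simp
        then have "z \<in> bd K n X (q - 1)" using hom_zero_sub[OF dcX] zc by blast
        then have "z \<in> kdiff n ` ch K X q" unfolding bd_def using False by simp
        then obtain l where "l \<in> ch K X q" "z = kdiff n l" by blast
        then show ?thesis unfolding z_def by metis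
      qed
      have cq: "card A0 = q" unfolding q_def ..
      have hs1: "hom K n (insert A0 X) q = Suc (hom K n X q)"
        by (rule hom_single(1)[OF dcX dcX' A0X cq ex])
      have hs2: "hom K n (insert A0 X) j = hom K n X j" if jq: "j \<noteq> q"
        by (rule hom_single(2)[OF dcX dcX' A0X cq ex jq])
      have cB: "(\<exists>B. B \<subseteq> {1..<m} \<and> card B = j \<and> a = u + ind B) \<longleftrightarrow> j = q"
      proof
        assume "\<exists>B. B \<subseteq> {1..<m} \<and> card B = j \<and> a = u + ind B"
        then obtain B where "B \<subseteq> {1..<m}" "card B = j" "a = u + ind B" by blast
        then show "j = q" using uniq unfolding q_def by blast
      next
        assume "j = q"
        then show "\<exists>B. B \<subseteq> {1..<m} \<and> card B = j \<and> a = u + ind B"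
          using A0sub True unfolding q_def by blast
      qed
      show ?thesis
      proof (cases "j = q")
        case True
        then show ?thesis using hs1 split[of j] cB IHX unfolding Y_def[symmetric] Yeq by simp
      next
        case False
        then show ?thesis using hs2[OF False] split[of j] cB IHX unfolding Y_def[symmetric] Yeq by simp
      qed
    next
      case False
      have "Y = X" using claim1 False XY by blast
      moreover have "\<not> (\<exists>B. B \<subseteq> {1..<m} \<and> card B = j \<and> a = u + ind B)"
        using uniq False by blast
      ultimately show ?thesis using split[of j] IHX unfolding Y_def[symmetric] by simp
    qed
  qed
qed

lemma prec_trans: "prec n a b \<Longrightarrow> prec n b c \<Longrightarrow> prec n a c"
  unfolding prec_def by auto

lemma max_exists:
  assumes "finite A" "A \<noteq> {}"
  shows "\<exists>u\<in>A. \<forall>v\<in>A. \<not> prec n u v"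
  using assms
proof (induction A rule: finite_ne_induct)
  case (singleton x)
  then show ?case using prec_irrefl by auto
next
  case (insert x F)
  then obtain y where y: "y \<in> F" "\<forall>v\<in>F. \<not> prec n y v" by blast
  show ?case
  proof (cases "prec n y x")
    case True
    have "\<forall>v\<in>insert x F. \<not> prec n x v"
    proof
      fix v assume "v \<in> insert x F"
      then show "\<not> prec n x v"
      proof
        assume "v = x" then show ?thesis using prec_irrefl by simp
      next
        assume "v \<in> F"
        then show ?thesis using y(2) True prec_trans by blast
      qed
    qed
    then show ?thesis by blast
  next
    case False
    then show ?thesis using y by blast
  qed
qed

lemma cnt_empty: "cnt n {} a j = 0"
  unfolding cnt_def by simp

lemma EK_all:
  fixes K :: "'a::field itself"
  assumes SS: "strongly_stable n J" and pos: "\<forall>u\<in>gens J. 0 < mdeg n u" and fin: "finite (gens J)"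
  shows "gens J \<subseteq> gens J \<longrightarrow> dcl n J (gens J) \<longrightarrow>
     (\<forall>a\<in>monomials n. \<forall>j. hom K n (Dl n (idl n (gens J)) a) j = cnt n (gens J) a j)"
  using fin
proof (induction rule: finite_remove_induct)
  case empty
  show ?case
  proof (intro impI ballI allI)
    fix a j
    have "Dl n (idl n {}) a = {}" unfolding Dl_def idl_def by simp
    then show "hom K n (Dl n (idl n {}) a) j = cnt n {} a j"
      by (simp only: hom_empty cnt_empty)
  qed
next
  case (remove A)
  show ?case
  proof (intro impI ballI allI)
    fix a j assume dA: "dcl n J A" and a: "a \<in> monomials n"
    obtain u where u: "u \<in> A" "\<forall>v\<in>A. \<not> prec n u v" using max_exists[OF remove.hyps(1,2)] by blast
    have sub: "A - {u} \<subseteq> gens J" using remove.hyps(3) by blast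
    have dA': "dcl n J (A - {u})"
      unfolding dcl_def
    proof (intro ballI impI)
      fix g s assume g: "g \<in> gens J" and s: "s \<in> A - {u}" and p: "prec n g s"
      have "g \<in> A" using dA g s p unfolding dcl_def by blast
      moreover have "g \<noteq> u" using u(2) s p by blast
      ultimately show "g \<in> A - {u}" by blast
    qed
    have IH: "\<forall>j. hom K n (Dl n (idl n (A - {u})) a) j = cnt n (A - {u}) a j"
      using remove.IH[OF u(1)] sub dA' a by blast
    show "hom K n (Dl n (idl n A) a) j = cnt n A a j"
      by (rule EK_step[OF SS pos remove.hyps(3) remove.hyps(1) dA u(1) u(2) a IH])
  qed
qed

lemma EK_mg:
  fixes K :: "'a::field itself"
  assumes SS: "strongly_stable n J" and pos: "\<forall>u\<in>gens J. 0 < mdeg n u" and fin: "finite (gens J)"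
    and a: "a \<in> monomials n"
  shows "betti_mg K n J j a = cnt n (gens J) a j"
proof -
  have "dcl n J (gens J)" unfolding dcl_def by blast
  then have "hom K n (Dl n (idl n (gens J)) a) j = cnt n (gens J) a j"
    using EK_all[OF SS pos fin, where K=K] a by blast
  then show ?thesis unfolding betti_mg_hom idl_gens[OF ss_upcl[OF SS]] .
qed

lemma EK_betti:
  fixes K :: "'a::field itself"
  assumes SS: "strongly_stable n J" and pos: "\<forall>u\<in>gens J. 0 < mdeg n u" and fin: "finite (gens J)"
  shows "betti K n J i = (\<Sum>u\<in>gens J. (mmax u - 1) choose i)"
proof -
  define G where "G = gens J"
  define P where "P = Sigma G (\<lambda>s. {B. B \<subseteq> {1..<mmax s} \<and> card B = i})"
  define phi where "phi x = fst x + ind (snd x)" for x :: "monomial \<times> nat set"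
  have finP: "finite P" unfolding P_def G_def using fin by (intro finite_SigmaI) auto
  have up: "upcl n J" using ss_upcl[OF SS] .
  have cntP: "cnt n G a i = card {x \<in> P. phi x = a}" for a
  proof -
    have "{(s, B). s \<in> G \<and> B \<subseteq> {1..<mmax s} \<and> card B = i \<and> a = s + ind B} = {x \<in> P. phi x = a}"
      unfolding P_def phi_def by auto
    then show ?thesis unfolding cnt_def by simp
  qed
  have phimon: "phi x \<in> monomials n" if xP: "x \<in> P" for x
  proof -
    obtain s B where x: "x = (s, B)" "s \<in> G" "B \<subseteq> {1..<mmax s}" using xP unfolding P_def by auto
    have smon: "s \<in> monomials n" using x(2) gens_sub up unfolding G_def upcl_def by blast
    have sp: "0 < mdeg n s" using pos x(2) unfolding G_def by blast
    have "mmax s \<le> n" by (rule mmax_facts(3)[OF smon sp])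
    then have Bn: "B \<subseteq> {1..n}" using x(3) by auto
    show ?thesis
    proof (rule monomialsI)
      fix k assume "phi x k \<noteq> 0"
      then have "s k \<noteq> 0 \<or> k \<in> B" unfolding x(1) phi_def by (auto simp: ind_apply split: if_splits)
      then show "1 \<le> k \<and> k \<le> n" using smon Bn unfolding monomials_def by auto
    qed
  qed
  have supp: "{a \<in> monomials n. betti_mg K n J i a \<noteq> 0} = phi ` P"
  proof
    show "{a \<in> monomials n. betti_mg K n J i a \<noteq> 0} \<subseteq> phi ` P"
    proof
      fix a assume "a \<in> {a \<in> monomials n. betti_mg K n J i a \<noteq> 0}"
      then have "card {x \<in> P. phi x = a} \<noteq> 0" using EK_mg[OF SS pos fin, of a K i] cntP unfolding G_def by simp
      then obtain x where "x \<in> P" "phi x = a" by (metis (mono_tags, lifting) Collect_empty_eq card.empty)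
      then show "a \<in> phi ` P" by blast
    qed
    show "phi ` P \<subseteq> {a \<in> monomials n. betti_mg K n J i a \<noteq> 0}"
    proof
      fix a assume "a \<in> phi ` P"
      then obtain x where x: "x \<in> P" "a = phi x" by blast
      have "{y \<in> P. phi y = a} \<noteq> {}" using x by blast
      moreover have "finite {y \<in> P. phi y = a}" using finP by simp
      ultimately have "card {y \<in> P. phi y = a} \<noteq> 0" by simp
      then have "betti_mg K n J i a \<noteq> 0" using EK_mg[OF SS pos fin phimon[OF x(1)], of K i] cntP x(2) unfolding G_def by simp
      then show "a \<in> {a \<in> monomials n. betti_mg K n J i a \<noteq> 0}" using phimon[OF x(1)] x(2) by simp
    qed
  qed
  have "betti K n J i = (\<Sum>a\<in>phi ` P. betti_mg K n J i a)" unfolding betti_def supp ..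
  also have "\<dots> = (\<Sum>a\<in>phi ` P. card {x \<in> P. phi x = a})"
  proof (rule sum.cong[OF refl])
    fix a assume "a \<in> phi ` P"
    then have "a \<in> monomials n" using phimon by blast
    then show "betti_mg K n J i a = card {x \<in> P. phi x = a}"
      using EK_mg[OF SS pos fin, of a K i] cntP unfolding G_def by simp
  qed
  also have "\<dots> = (\<Sum>a\<in>phi ` P. \<Sum>x\<in>{x \<in> P. phi x = a}. (1::nat))" by simp
  also have "\<dots> = (\<Sum>x\<in>P. (1::nat))" by (rule sum.group[OF finP finite_imageI[OF finP]]) simp
  also have "\<dots> = card P" by simp
  also have "\<dots> = (\<Sum>s\<in>G. card {B. B \<subseteq> {1..<mmax s} \<and> card B = i})"
    unfolding P_def using fin unfolding G_def by (intro card_SigmaI) auto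
  also have "\<dots> = (\<Sum>s\<in>G. (mmax s - 1) choose i)"
    by (intro sum.cong refl) (simp add: n_subsets)
  finally show ?thesis unfolding G_def .
qed

definition Ld :: "nat \<Rightarrow> monomial set \<Rightarrow> nat \<Rightarrow> monomial set" where
  "Ld n I j = {w \<in> I. mdeg n w = j}"

lemma finite_deg: "finite {u \<in> monomials n. mdeg n u \<le> D}"
proof (rule finite_subset)
  show "{u \<in> monomials n. mdeg n u \<le> D} \<subseteq> {f. \<forall>x. (x \<in> {1..n} \<longrightarrow> f x \<in> {0..D}) \<and> (x \<notin> {1..n} \<longrightarrow> f x = 0)}"
  proof (intro subsetI CollectI allI conjI impI)
    fix f x assume f: "f \<in> {u \<in> monomials n. mdeg n u \<le> D}"
    {
      assume x: "x \<in> {1..n}"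
      have "f x \<le> mdeg n f" unfolding mdeg_def using x by (intro member_le_sum) auto
      then show "f x \<in> {0..D}" using f by simp
    }
    {
      assume "x \<notin> {1..n}"
      then show "f x = 0" using f unfolding monomials_def by auto
    }
  qed
  show "finite {f. \<forall>x. (x \<in> {1..n} \<longrightarrow> f x \<in> {0..D}) \<and> (x \<notin> {1..n} \<longrightarrow> f x = (0::nat))}"
    by (rule finite_set_of_finite_funs) auto
qed

lemma Ld_fin: "I \<subseteq> monomials n \<Longrightarrow> finite (Ld n I j)"
  by (rule finite_subset[OF _ finite_deg[of n j]]) (auto simp: Ld_def)

lemma deg_part_ss:
  assumes SS: "strongly_stable n I"
  shows "strongly_stable n (deg_part n I j)"
proof -
  have up: "upcl n I" using ss_upcl[OF SS] .
  have mi: "monomial_ideal n (deg_part n I j)"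
    unfolding monomial_ideal_def deg_part_def using order_trans by blast
  have "mv v i k \<in> deg_part n I j"
    if v: "v \<in> deg_part n I j" and vk: "0 < v k" and i: "1 \<le> i" "i < k" for v i k
  proof -
    obtain u where u: "u \<in> I" "mdeg n u = j" "u \<le> v" and vmon: "v \<in> monomials n"
      using v unfolding deg_part_def by blast
    have umon: "u \<in> monomials n" using u up unfolding upcl_def by blast
    have kn: "k \<le> n" using vk vmon monomials_zero[OF vmon, of k] by (metis not_le neq0_conv)
    have ik: "i \<noteq> k" using i by simp
    have mvmon: "mv v i k \<in> monomials n" using mv_monomials[OF vmon _ ik] i kn by simp
    show ?thesis
    proof (cases "u k < v k")
      case True
      have "u \<le> mv v i k" unfolding le_fun_def
      proof
        fix x show "u x \<le> mv v i k x"
          using le_funD[OF u(3), of x] True ik by (auto simp: mv_apply)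
      qed
      then show ?thesis using u mvmon unfolding deg_part_def by blast
    next
      case False
      then have uk: "u k = v k" using le_funD[OF u(3), of k] by simp
      then have ukp: "0 < u k" using vk by simp
      have "mv u i k \<in> I" using ss_mv[OF SS u(1) ukp i] .
      moreover have "mdeg n (mv u i k) = j" using mdeg_mv[of i k n u] ik i kn ukp u(2) by simp
      moreover have "mv u i k \<le> mv v i k" unfolding le_fun_def
      proof
        fix x show "mv u i k x \<le> mv v i k x"
          using le_funD[OF u(3), of x] uk ik by (auto simp: mv_apply)
      qed
      ultimately show ?thesis using mvmon unfolding deg_part_def by blast
    qed
  qed
  then show ?thesis using mi unfolding strongly_stable_def mv_def by blast
qed

lemma gens_deg_part:
  assumes up: "upcl n I"
  shows "gens (deg_part n I j) = Ld n I j"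
proof
  have sub: "I \<subseteq> monomials n" using up unfolding upcl_def by blast
  show "gens (deg_part n I j) \<subseteq> Ld n I j"
  proof
    fix w assume w: "w \<in> gens (deg_part n I j)"
    then have wd: "w \<in> deg_part n I j" using gens_sub by blast
    then obtain u where u: "u \<in> I" "mdeg n u = j" "u \<le> w" unfolding deg_part_def by blast
    have "u \<in> deg_part n I j" using u sub unfolding deg_part_def by blast
    then have "u = w" using gens_min[OF w] u(3) by blast
    then show "w \<in> Ld n I j" using u unfolding Ld_def by simp
  qed
  show "Ld n I j \<subseteq> gens (deg_part n I j)"
  proof
    fix w assume w: "w \<in> Ld n I j"
    then have wI: "w \<in> I" and wj: "mdeg n w = j" unfolding Ld_def by auto
    have wmon: "w \<in> monomials n" using wI sub by blast
    have wd: "w \<in> deg_part n I j" using wI wj wmon unfolding deg_part_def by blast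
    have "v = w" if vd: "v \<in> deg_part n I j" and vw: "v \<le> w" for v
    proof -
      obtain u where u: "u \<in> I" "mdeg n u = j" "u \<le> v" and vmon: "v \<in> monomials n"
        using vd unfolding deg_part_def by blast
      have "mdeg n u \<le> mdeg n v" using mdeg_mono[OF u(3)] .
      then have "mdeg n w \<le> mdeg n v" using u(2) wj by simp
      then show "v = w" using mono_eq[OF vmon wmon vw] by simp
    qed
    then show "w \<in> gens (deg_part n I j)" using wd unfolding gens_def by blast
  qed
qed

lemma deg_ge:
  assumes up: "upcl n I" and gd: "\<forall>u\<in>gens I. d \<le> mdeg n u" and w: "w \<in> I"
  shows "d \<le> mdeg n w"
proof -
  obtain g where "g \<in> gens I" "g \<le> w" using exists_gen[OF up w] by blast
  then show ?thesis using gd mdeg_mono[of g w n] by fastforce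
qed

lemma Ld_gens:
  assumes up: "upcl n I" and gd: "\<forall>u\<in>gens I. d \<le> mdeg n u" and j: "j \<le> d"
  shows "Ld n I j = {u \<in> gens I. mdeg n u = j}"
proof
  have sub: "I \<subseteq> monomials n" using up unfolding upcl_def by blast
  show "Ld n I j \<subseteq> {u \<in> gens I. mdeg n u = j}"
  proof
    fix w assume "w \<in> Ld n I j"
    then have w: "w \<in> I" "mdeg n w = j" unfolding Ld_def by auto
    have "v = w" if "v \<in> I" "v \<le> w" for v
    proof -
      have "d \<le> mdeg n v" using deg_ge[OF up gd that(1)] .
      then have "mdeg n w \<le> mdeg n v" using w j deg_ge[OF up gd w(1)] by simp
      then show ?thesis using mono_eq[of v n w] that sub w by blast
    qed
    then show "w \<in> {u \<in> gens I. mdeg n u = j}" using w unfolding gens_def by blast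
  qed
  show "{u \<in> gens I. mdeg n u = j} \<subseteq> Ld n I j" using gens_sub unfolding Ld_def by blast
qed

lemma supp_fin: "w \<in> monomials n \<Longrightarrow> finite {i. w i \<noteq> 0}"
  by (rule finite_subset[of _ "{1..n}"]) (auto simp: monomials_def)

lemma supp_ne: "0 < mdeg n w \<Longrightarrow> {i. w i \<noteq> 0} \<noteq> {}"
proof
  assume "0 < mdeg n w" "{i. w i \<noteq> 0} = {}"
  then have "\<forall>i. w i = 0" by auto
  then have "mdeg n w = 0" unfolding mdeg_def by simp
  then show False using \<open>0 < mdeg n w\<close> by simp
qed

lemma mmax_add1:
  assumes w: "w \<in> monomials n" "0 < mdeg n w" and l: "mmax w \<le> l"
  shows "mmax (w + ind {l}) = l"
proof -
  have e: "{i. (w + ind {l}) i \<noteq> 0} = insert l {i. w i \<noteq> 0}" by (auto simp: ind_apply)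
  have "mmax (w + ind {l}) = Max (insert l {i. w i \<noteq> 0})" unfolding mmax_def e ..
  also have "\<dots> = max l (Max {i. w i \<noteq> 0})" using supp_fin[OF w(1)] supp_ne[OF w(2)] by (simp add: Max_insert)
  also have "\<dots> = l" using l unfolding mmax_def by simp
  finally show ?thesis .
qed

lemma mmax_le:
  assumes w: "w \<in> monomials n" "0 < mdeg n w" and wv: "w \<le> v" and vz: "\<forall>k. m < k \<longrightarrow> v k = 0"
  shows "mmax w \<le> m"
proof -
  have "\<forall>i\<in>{i. w i \<noteq> 0}. i \<le> m"
  proof
    fix i assume "i \<in> {i. w i \<noteq> 0}"
    then have "v i \<noteq> 0" using le_funD[OF wv, of i] by simp
    then show "i \<le> m" using vz by (meson not_le)
  qed
  then show ?thesis unfolding mmax_def using supp_fin[OF w(1)] supp_ne[OF w(2)] by simp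
qed

lemma step_decomp:
  assumes SS: "strongly_stable n I" and gd: "\<forall>u\<in>gens I. d \<le> mdeg n u" and d1: "1 \<le> d" and dj: "d \<le> j"
  defines "Q \<equiv> SIGMA w:Ld n I j. {mmax w..n}" and "psi \<equiv> \<lambda>x. fst x + ind {snd x}"
  shows "Ld n I (Suc j) = {u \<in> gens I. mdeg n u = Suc j} \<union> psi ` Q"
    and "{u \<in> gens I. mdeg n u = Suc j} \<inter> psi ` Q = {}"
    and "inj_on psi Q"
    and "\<forall>x\<in>Q. mmax (psi x) = snd x"
proof -
  have up: "upcl n I" using ss_upcl[OF SS] .
  have sub: "I \<subseteq> monomials n" using up unfolding upcl_def by blast
  have wfacts: "w \<in> I" "w \<in> monomials n" "0 < mdeg n w" "mdeg n w = j" if "w \<in> Ld n I j" for w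
    using that sub d1 dj unfolding Ld_def by auto
  have xfacts: "psi x \<in> I" "mdeg n (psi x) = Suc j" "psi x \<notin> gens I" "mmax (psi x) = snd x"
    if xQ: "x \<in> Q" for x
  proof -
    obtain w l where x: "x = (w, l)" "w \<in> Ld n I j" "mmax w \<le> l" "l \<le> n"
      using xQ unfolding Q_def by auto
    note wf = wfacts[OF x(2)]
    have l1: "1 \<le> l" using mmax_facts(2)[OF wf(2,3)] x(3) by simp
    have px: "psi x = w + ind {l}" unfolding psi_def x by simp
    have pmon: "psi x \<in> monomials n"
    proof (rule monomialsI)
      fix k assume "psi x k \<noteq> 0"
      then have "w k \<noteq> 0 \<or> k = l" unfolding px by (auto simp: ind_apply split: if_splits)
      then show "1 \<le> k \<and> k \<le> n" using wf(2) l1 x(4) unfolding monomials_def by auto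
    qed
    have wle: "w \<le> psi x" unfolding px le_fun_def by simp
    show pI: "psi x \<in> I" using up wf(1) pmon wle unfolding upcl_def by blast
    have ln: "{l} \<subseteq> {1..n}" using l1 x(4) by simp
    show "mdeg n (psi x) = Suc j" unfolding px mdeg_add mdeg_ind[OF ln] using wf(4) by simp
    have "w \<noteq> psi x" unfolding px by (auto simp: fun_eq_iff ind_apply)
    then show "psi x \<notin> gens I" using gens_min[of "psi x" I w] wf(1) wle by blast
    show "mmax (psi x) = snd x" using px x(1) mmax_add1[OF wf(2,3) x(3)] by simp
  qed
  show "\<forall>x\<in>Q. mmax (psi x) = snd x" using xfacts(4) by blast
  show "inj_on psi Q"
  proof (rule inj_onI)
    fix x y assume xy: "x \<in> Q" "y \<in> Q" "psi x = psi y"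
    then have s: "snd x = snd y" using xfacts(4) by metis
    then have "fst x = fst y" using xy(3) unfolding psi_def by (auto simp: fun_eq_iff)
    then show "x = y" using s by (simp add: prod_eq_iff)
  qed
  show "{u \<in> gens I. mdeg n u = Suc j} \<inter> psi ` Q = {}" using xfacts(3) by blast
  show "Ld n I (Suc j) = {u \<in> gens I. mdeg n u = Suc j} \<union> psi ` Q"
  proof
    show "{u \<in> gens I. mdeg n u = Suc j} \<union> psi ` Q \<subseteq> Ld n I (Suc j)"
      using xfacts(1,2) gens_sub unfolding Ld_def by blast
    show "Ld n I (Suc j) \<subseteq> {u \<in> gens I. mdeg n u = Suc j} \<union> psi ` Q"
    proof
      fix v assume v: "v \<in> Ld n I (Suc j)"
      have vI: "v \<in> I" and vd: "mdeg n v = Suc j" using v unfolding Ld_def by auto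
      have vmon: "v \<in> monomials n" using vI sub by blast
      show "v \<in> {u \<in> gens I. mdeg n u = Suc j} \<union> psi ` Q"
      proof (cases "v \<in> gens I")
        case True then show ?thesis using vd by blast
      next
        case False
        then obtain v' where v': "v' \<in> I" "v' \<le> v" "v' \<noteq> v" using vI unfolding gens_def by blast
        obtain p where p: "v' p < v p"
        proof (rule ccontr)
          assume "\<not> thesis"
          then have "\<forall>p. v p \<le> v' p" using that by (meson not_le)
          then have "v \<le> v'" unfolding le_fun_def by blast
          then show False using v' by (simp add: antisym)
        qed
        define m where "m = mmax v"
        have vpos: "0 < mdeg n v" using vd by simp
        have m1: "1 \<le> m" and mn: "m \<le> n" and vm: "0 < v m" and vz: "\<And>k. m < k \<Longrightarrow> v k = 0"
          using mmax_facts[OF vmon vpos] unfolding m_def by auto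
        have pm: "p \<le> m"
        proof (rule ccontr)
          assume "\<not> p \<le> m"
          then have "v p = 0" using vz by simp
          then show False using p by simp
        qed
        have p1: "1 \<le> p"
        proof (rule ccontr)
          assume "\<not> 1 \<le> p"
          then have "v p = 0" using monomials_zero[OF vmon, of p] by simp
          then show False using p by simp
        qed
        define y where "y = v(p := v p - 1)"
        have ymon: "y \<in> monomials n" unfolding y_def using vmon unfolding monomials_def by auto
        have "v' \<le> y" unfolding y_def le_fun_def using le_funD[OF v'(2)] p by auto
        then have yI: "y \<in> I" using up v'(1) ymon unfolding upcl_def by blast
        define w where "w = v(m := v m - 1)"
        have wI: "w \<in> I"
        proof (cases "p = m")
          case True then show ?thesis using yI unfolding w_def y_def by simp
        next
          case False
          then have pm': "p < m" using pm by simp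
          have ym: "0 < y m" unfolding y_def using False vm by simp
          have "mv y p m = w" unfolding mv_def y_def w_def using False p by (auto simp: fun_eq_iff)
          then show ?thesis using ss_mv[OF SS yI ym p1 pm'] by simp
        qed
        have wd: "mdeg n w + 1 = mdeg n v"
        proof -
          have "mdeg n w + v m = mdeg n v + (v m - 1)"
            unfolding mdeg_def w_def using sum_upd_nat[of "{1..n}" m v "v m - 1"] m1 mn by simp
          then show ?thesis using vm by simp
        qed
        have wLd: "w \<in> Ld n I j" using wI wd vd unfolding Ld_def by simp
        have wmon: "w \<in> monomials n" using wI sub by blast
        have wpos: "0 < mdeg n w" using wfacts(3)[OF wLd] .
        have wv: "w \<le> v" unfolding w_def le_fun_def by simp
        have "mmax w \<le> m" using mmax_le[OF wmon wpos wv] vz by blast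
        then have xQ: "(w, m) \<in> Q" unfolding Q_def using wLd mn by simp
        have "psi (w, m) = v" unfolding psi_def w_def using vm by (auto simp: fun_eq_iff ind_apply)
        then show ?thesis using xQ by (metis UnI2 image_eqI)
      qed
    qed
  qed
qed

lemma f_step:
  assumes SS: "strongly_stable n I" and gd: "\<forall>u\<in>gens I. d \<le> mdeg n u" and d1: "1 \<le> d" and dj: "d \<le> j"
  shows "(\<Sum>v\<in>Ld n I (Suc j). (mmax v - 1) choose i)
     = (\<Sum>u\<in>{u \<in> gens I. mdeg n u = Suc j}. (mmax u - 1) choose i)
       + (\<Sum>w\<in>Ld n I j. (mmax w - 1) choose i)
       + (\<Sum>w\<in>Ld n I j. \<Sum>l\<in>{mmax w<..n}. (l - 1) choose i)"
proof -
  define Q where "Q = (SIGMA w:Ld n I j. {mmax w..n})"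
  define psi where "psi = (\<lambda>x::monomial \<times> nat. fst x + ind {snd x})"
  note sd = step_decomp[OF SS gd d1 dj, folded Q_def psi_def]
  have up: "upcl n I" using ss_upcl[OF SS] .
  have sub: "I \<subseteq> monomials n" using up unfolding upcl_def by blast
  have finL: "finite (Ld n I j)" using Ld_fin[OF sub] .
  have finL1: "finite (Ld n I (Suc j))" using Ld_fin[OF sub] .
  have finQ: "finite Q" unfolding Q_def using finL by (intro finite_SigmaI) auto
  have finG: "finite {u \<in> gens I. mdeg n u = Suc j}"
    using finL1 sd(1) by (metis finite_Un)
  have "(\<Sum>v\<in>Ld n I (Suc j). (mmax v - 1) choose i)
      = (\<Sum>u\<in>{u \<in> gens I. mdeg n u = Suc j}. (mmax u - 1) choose i) + (\<Sum>v\<in>psi ` Q. (mmax v - 1) choose i)"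
    unfolding sd(1) by (rule sum.union_disjoint[OF finG finite_imageI[OF finQ] sd(2)])
  also have "(\<Sum>v\<in>psi ` Q. (mmax v - 1) choose i) = (\<Sum>x\<in>Q. (mmax (psi x) - 1) choose i)"
    by (rule sum.reindex[OF sd(3), unfolded comp_def])
  also have "\<dots> = (\<Sum>x\<in>Q. (snd x - 1) choose i)"
    using sd(4) by (intro sum.cong refl) (simp add: psi_def)
  also have "\<dots> = (\<Sum>w\<in>Ld n I j. \<Sum>l\<in>{mmax w..n}. (l - 1) choose i)"
  proof -
    have "(\<Sum>x\<in>Q. (snd x - 1) choose i) = (\<Sum>(w, l)\<in>Q. (l - 1) choose i)"
      by (intro sum.cong refl) (simp add: split_beta)
    also have "\<dots> = (\<Sum>w\<in>Ld n I j. \<Sum>l\<in>{mmax w..n}. (l - 1) choose i)"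
      unfolding Q_def using finL by (subst sum.Sigma) auto
    finally show ?thesis .
  qed
  also have "\<dots> = (\<Sum>w\<in>Ld n I j. ((mmax w - 1) choose i) + (\<Sum>l\<in>{mmax w<..n}. (l - 1) choose i))"
  proof (intro sum.cong refl)
    fix w assume w: "w \<in> Ld n I j"
    have wmon: "w \<in> monomials n" and wpos: "0 < mdeg n w" using w sub d1 dj unfolding Ld_def by auto
    have "mmax w \<le> n" using mmax_facts(3)[OF wmon wpos] .
    then have "{mmax w..n} = insert (mmax w) {mmax w<..n}" by auto
    then show "(\<Sum>l\<in>{mmax w..n}. (l - 1) choose i) = ((mmax w - 1) choose i) + (\<Sum>l\<in>{mmax w<..n}. (l - 1) choose i)"
      by simp
  qed
  also have "\<dots> = (\<Sum>w\<in>Ld n I j. (mmax w - 1) choose i) + (\<Sum>w\<in>Ld n I j. \<Sum>l\<in>{mmax w<..n}. (l - 1) choose i)"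
    by (rule sum.distrib)
  finally show ?thesis by simp
qed

lemma f_total:
  assumes SS: "strongly_stable n I" and gd: "\<forall>u\<in>gens I. d \<le> mdeg n u" and d1: "1 \<le> d" and dt: "d \<le> t"
  shows "(\<Sum>v\<in>Ld n I t. (mmax v - 1) choose i)
     = (\<Sum>u\<in>{u \<in> gens I. mdeg n u \<le> t}. (mmax u - 1) choose i)
       + (\<Sum>j\<in>{d..<t}. \<Sum>w\<in>Ld n I j. \<Sum>l\<in>{mmax w<..n}. (l - 1) choose i)"
  using dt
proof (induction t rule: dec_induct)
  case base
  have up: "upcl n I" using ss_upcl[OF SS] .
  have "Ld n I d = {u \<in> gens I. mdeg n u = d}" using Ld_gens[OF up gd] by simp
  moreover have "{u \<in> gens I. mdeg n u \<le> d} = {u \<in> gens I. mdeg n u = d}" using gd by force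
  ultimately show ?case by simp
next
  case (step t)
  have up: "upcl n I" using ss_upcl[OF SS] .
  have sub: "I \<subseteq> monomials n" using up unfolding upcl_def by blast
  have fin: "finite {u \<in> gens I. mdeg n u \<le> Suc t}"
    by (rule finite_subset[OF _ finite_deg[of n "Suc t"]]) (use gens_sub sub in blast)
  have split: "{u \<in> gens I. mdeg n u \<le> Suc t} = {u \<in> gens I. mdeg n u \<le> t} \<union> {u \<in> gens I. mdeg n u = Suc t}"
    by auto
  have "(\<Sum>u\<in>{u \<in> gens I. mdeg n u \<le> Suc t}. (mmax u - 1) choose i)
      = (\<Sum>u\<in>{u \<in> gens I. mdeg n u \<le> t}. (mmax u - 1) choose i) + (\<Sum>u\<in>{u \<in> gens I. mdeg n u = Suc t}. (mmax u - 1) choose i)"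
    unfolding split by (rule sum.union_disjoint) (use fin split in auto)
  moreover have "(\<Sum>j\<in>{d..<Suc t}. \<Sum>w\<in>Ld n I j. \<Sum>l\<in>{mmax w<..n}. (l - 1) choose i)
      = (\<Sum>j\<in>{d..<t}. \<Sum>w\<in>Ld n I j. \<Sum>l\<in>{mmax w<..n}. (l - 1) choose i) + (\<Sum>w\<in>Ld n I t. \<Sum>l\<in>{mmax w<..n}. (l - 1) choose i)"
    using step.hyps(1) by simp
  ultimately show ?case using f_step[OF SS gd d1 step.hyps(1), of i] step.IH by simp
qed

lemma card_fibres:
  assumes "finite L" "finite T"
  shows "(\<Sum>s\<in>T. card {u \<in> L. h u = s}) = card {u \<in> L. h u \<in> T}"
proof -
  have "(\<Sum>s\<in>T. card {u \<in> L. h u = s}) = (\<Sum>s\<in>T. \<Sum>x\<in>{x \<in> {u \<in> L. h u \<in> T}. h x = s}. (1::nat))"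
    by (intro sum.cong refl) (auto intro!: arg_cong[where f=card])
  also have "\<dots> = (\<Sum>x\<in>{u \<in> L. h u \<in> T}. (1::nat))"
    by (rule sum.group) (use assms in auto)
  finally show ?thesis by simp
qed

lemma rhs_term:
  assumes SS: "strongly_stable n I" and d1: "1 \<le> d" and dj: "d \<le> j"
  shows "(\<Sum>k=i+1..n. int (m_le (deg_part n I j) (k - 1) * ((k - 1) choose i)))
     = int (\<Sum>w\<in>Ld n I j. \<Sum>l\<in>{mmax w<..n}. (l - 1) choose i)"
proof -
  have up: "upcl n I" using ss_upcl[OF SS] .
  have sub: "I \<subseteq> monomials n" using up unfolding upcl_def by blast
  define L where "L = Ld n I j"
  have finL: "finite L" unfolding L_def using Ld_fin[OF sub] .
  have m1: "1 \<le> mmax w" if "w \<in> L" for w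
  proof -
    have "w \<in> monomials n" "0 < mdeg n w" using that sub d1 dj unfolding L_def Ld_def by auto
    then show ?thesis using mmax_facts(2) by blast
  qed
  have mle: "m_le (deg_part n I j) (k - 1) = card {w \<in> L. mmax w < k}" if k: "1 \<le> k" for k
  proof -
    have "m_le (deg_part n I j) (k - 1) = (\<Sum>s\<in>{1..k-1}. card {u \<in> L. mmax u = s})"
      unfolding m_le_def m_count_def gens_deg_part[OF up] L_def ..
    also have "\<dots> = card {u \<in> L. mmax u \<in> {1..k-1}}" by (rule card_fibres[OF finL]) simp
    also have "{u \<in> L. mmax u \<in> {1..k-1}} = {w \<in> L. mmax w < k}" using m1 k by force
    finally show ?thesis .
  qed
  have "(\<Sum>k=i+1..n. int (m_le (deg_part n I j) (k - 1) * ((k - 1) choose i)))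
      = int (\<Sum>k=i+1..n. card {w \<in> L. mmax w < k} * ((k - 1) choose i))"
    unfolding of_nat_sum
  proof (intro sum.cong refl)
    fix k assume "k \<in> {i + 1..n}"
    then have "1 \<le> k" by simp
    then show "int (m_le (deg_part n I j) (k - 1) * (k - 1 choose i)) = int (card {w \<in> L. mmax w < k} * (k - 1 choose i))"
      using mle by simp
  qed
  also have "(\<Sum>k=i+1..n. card {w \<in> L. mmax w < k} * ((k - 1) choose i))
      = (\<Sum>k=i+1..n. \<Sum>w\<in>L. if mmax w < k then (k - 1) choose i else 0)"
  proof (intro sum.cong refl)
    fix k
    have "(\<Sum>w\<in>L. if mmax w < k then (k - 1) choose i else 0) = (\<Sum>w\<in>{w \<in> L. mmax w < k}. (k - 1) choose i)"
      by (rule sum.inter_filter[OF finL, symmetric])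
    then show "card {w \<in> L. mmax w < k} * ((k - 1) choose i) = (\<Sum>w\<in>L. if mmax w < k then (k - 1) choose i else 0)"
      by simp
  qed
  also have "\<dots> = (\<Sum>w\<in>L. \<Sum>k=i+1..n. if mmax w < k then (k - 1) choose i else 0)"
    by (rule sum.swap)
  also have "\<dots> = (\<Sum>w\<in>L. \<Sum>l\<in>{mmax w<..n}. (l - 1) choose i)"
  proof (rule sum.cong[OF refl])
    fix w :: monomial
    have "(\<Sum>k=i+1..n. if mmax w < k then (k - 1) choose i else 0) = (\<Sum>k=1..n. if mmax w < k then (k - 1) choose i else 0)"
      by (rule sum.mono_neutral_left) (auto simp: binomial_eq_0)
    also have "\<dots> = (\<Sum>k\<in>{k \<in> {1..n}. mmax w < k}. (k - 1) choose i)"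
      by (rule sum.inter_filter[symmetric]) simp
    also have "\<dots> = (\<Sum>k\<in>{mmax w<..n}. (k - 1) choose i)"
      by (intro sum.cong) auto
    finally show "(\<Sum>k=i+1..n. if mmax w < k then (k - 1) choose i else 0) = (\<Sum>l\<in>{mmax w<..n}. (l - 1) choose i)" .
  qed
  finally show ?thesis unfolding L_def .
qed

theorem lemma3p1:
  fixes K :: "'k::field itself" and n d N :: nat and I :: "monomial set"
  assumes "strongly_stable n I"
    and "1 \<le> d" and "d \<le> N"
    and "\<forall>u\<in>gens I. d \<le> mdeg n u \<and> mdeg n u \<le> N"
  shows "int (betti K n (deg_part n I (N + 1)) i) - int (betti K n I i) =
    (\<Sum>j=d..N. \<Sum>k=i+1..n. int (m_le (deg_part n I j) (k - 1) * ((k - 1) choose i)))"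
proof -
  note SS = assms(1) and d1 = assms(2) and dN = assms(3)
  have gd: "\<forall>u\<in>gens I. d \<le> mdeg n u" using assms(4) by blast
  have up: "upcl n I" using ss_upcl[OF SS] .
  have sub: "I \<subseteq> monomials n" using up unfolding upcl_def by blast
  have finG: "finite (gens I)"
    by (rule finite_subset[OF _ finite_deg[of n N]]) (use assms(4) gens_sub sub in blast)
  have posG: "\<forall>u\<in>gens I. 0 < mdeg n u" using gd d1 by force
  have b1: "betti K n I i = (\<Sum>u\<in>gens I. (mmax u - 1) choose i)"
    by (rule EK_betti[OF SS posG finG])
  define J2 where "J2 = deg_part n I (N + 1)"
  have SS2: "strongly_stable n J2" unfolding J2_def by (rule deg_part_ss[OF SS])
  have g2: "gens J2 = Ld n I (N + 1)" unfolding J2_def by (rule gens_deg_part[OF up])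
  have fin2: "finite (gens J2)" unfolding g2 by (rule Ld_fin[OF sub])
  have pos2: "\<forall>u\<in>gens J2. 0 < mdeg n u" unfolding g2 Ld_def by simp
  have b2: "betti K n J2 i = (\<Sum>v\<in>Ld n I (N + 1). (mmax v - 1) choose i)"
    using EK_betti[OF SS2 pos2 fin2, of K i] unfolding g2 .
  have ft: "(\<Sum>v\<in>Ld n I (Suc N). (mmax v - 1) choose i)
     = (\<Sum>u\<in>{u \<in> gens I. mdeg n u \<le> Suc N}. (mmax u - 1) choose i)
       + (\<Sum>j\<in>{d..<Suc N}. \<Sum>w\<in>Ld n I j. \<Sum>l\<in>{mmax w<..n}. (l - 1) choose i)"
    using f_total[OF SS gd d1, of "Suc N" i] dN by simp
  have "{u \<in> gens I. mdeg n u \<le> Suc N} = gens I" using assms(4) by force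
  moreover have "{d..<Suc N} = {d..N}" by auto
  ultimately have main: "betti K n J2 i = betti K n I i
      + (\<Sum>j\<in>{d..N}. \<Sum>w\<in>Ld n I j. \<Sum>l\<in>{mmax w<..n}. (l - 1) choose i)"
    using b1 b2 ft by simp
  have rhs: "(\<Sum>j=d..N. \<Sum>k=i+1..n. int (m_le (deg_part n I j) (k - 1) * ((k - 1) choose i)))
      = (\<Sum>j=d..N. int (\<Sum>w\<in>Ld n I j. \<Sum>l\<in>{mmax w<..n}. (l - 1) choose i))"
    by (intro sum.cong refl) (use rhs_term[OF SS d1] in auto)
  show ?thesis unfolding J2_def[symmetric] rhs main by (simp add: of_nat_sum)
qed

end
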